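(* Let $f\in\mathbb{Z}_2[x]$, $n\ge2$, and let $\sigma$ be a strongly splitting cycle of $f_n$. Let $A_n=v_2(a_n(x)-1)$ and $B_n=v_2(b_n(x))$ for a representative $x\in\mathbb{Z}_2$ of a point of $\sigma$. 1) If $\min\{A_n,n\}>B_n$, then all lifts of $\sigma$ strongly split $B_n-1$ times (i.e. all cycles lying above $\sigma$ at levels $n+1,\dots,n+B_n-1$ strongly split), and then all the cycles lying above $\sigma$ at level $n+B_n$ strongly grow. 2) If $A_n\le B_n$ and $A_n<n$, then one of the two lifts of $\sigma$ behaves like $\sigma$, i.e. it strongly splits and satisfies $A_{n+1}\le B_{n+1}$ and $A_{n+1}<n+1$; the other lift splits $A_n-1$ times, and then all the cycles lying above it at level $n+A_n$ strongly grow forever. 3) If $B_n\ge n$ and $A_n\ge n$, then all lifts of $\sigma$ strongly split at least $n-1$ times.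
   Context: $v_2$ is the $2$-adic valuation. $f_n$ is the induced map on $\mathbb{Z}/2^n\mathbb{Z}$, $f_n(x\bmod 2^n)=f(x)\bmod 2^n$. A $k$-cycle of $f_n$ is a tuple $\sigma=(x_1,\dots,x_k)$ of distinct elements with $f_n(x_i)=x_{i+1}$, $f_n(x_k)=x_1$; its lifts are the cycles of $f_{n+1}$ in $\{y\in\mathbb{Z}/2^{n+1}\mathbb{Z}:y\bmod 2^n\in\sigma\}$; a cycle lies above $\sigma$ if its reduction mod $2^n$ lies in $\sigma$. For a $k$-cycle at level $n$ and $x\in\mathbb{Z}_2$, $a_n(x)=(f^k)'(x)$, $b_n(x)=(f^k(x)-x)/2^n$ (and analogously at every level with the length of the cycle at that level). A cycle grows if it has a single lift, of twice its length; it splits if it has two lifts of the same length as itself. A cycle strongly grows if $a\equiv1\pmod4$, $b\equiv1\pmod2$; strongly splits if $a\equiv1\pmod4$, $b\equiv0\pmod2$ ($a,b$ the corresponding $a_n,b_n$ at a representative). A cycle "splits $j$ times" if it and all cycles lying above it at the next $j-1$ levels split; "grows forever" means it and all cycles lying above it at all higher levels grow. The quantities $\min\{A_n,n\}$ and the conditions in 1)–3) do not depend on the choice of representative $x$. *)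

theory Defs
  imports "HOL-Computational_Algebra.Polynomial" "HOL-Library.Extended_Nat"
begin

text \<open>Z_2 = inverse limit of Z/2^n: compatible sequences of residues s n in {0..<2^n}.\<close>
definition z2_seq :: "(nat \<Rightarrow> int) \<Rightarrow> bool" where
  "z2_seq s \<longleftrightarrow> (\<forall>n. 0 \<le> s n \<and> s n < 2 ^ n \<and> s (Suc n) mod 2 ^ n = s n)"

typedef z2 = "{s. z2_seq s}"
  by (rule exI[of _ "\<lambda>_. 0"]) (simp add: z2_seq_def)

setup_lifting type_definition_z2

lemma z2_seq_mod: "z2_seq s \<Longrightarrow> s n mod 2 ^ n = s n"
  unfolding z2_seq_def by (simp add: mod_pos_pos_trivial)

lemma z2_closed2:
  fixes g :: "int \<Rightarrow> int \<Rightarrow> int"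
  assumes a: "z2_seq a" and b: "z2_seq b"
    and g: "\<And>x y m. g (x mod m) (y mod m) mod m = g x y mod m"
  shows "z2_seq (\<lambda>n. g (a n) (b n) mod 2 ^ n)"
  unfolding z2_seq_def
proof (intro allI conjI)
  fix n :: nat
  show "0 \<le> g (a n) (b n) mod 2 ^ n" by simp
  show "g (a n) (b n) mod 2 ^ n < 2 ^ n" by simp
  have "g (a (Suc n)) (b (Suc n)) mod 2 ^ Suc n mod 2 ^ n = g (a (Suc n)) (b (Suc n)) mod 2 ^ n"
    by (simp add: mod_mod_cancel)
  also have "\<dots> = g (a (Suc n) mod 2 ^ n) (b (Suc n) mod 2 ^ n) mod 2 ^ n" by (rule g[symmetric])
  also have "\<dots> = g (a n) (b n) mod 2 ^ n" using a b unfolding z2_seq_def by simp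
  finally show "g (a (Suc n)) (b (Suc n)) mod 2 ^ Suc n mod 2 ^ n = g (a n) (b n) mod 2 ^ n" .
qed

lemma z2_seq_0: "z2_seq (\<lambda>n. 0)" by (simp add: z2_seq_def)

instantiation z2 :: comm_ring_1
begin

lift_definition zero_z2 :: z2 is "\<lambda>n. 0" by (rule z2_seq_0)
lift_definition one_z2 :: z2 is "\<lambda>n. 1 mod 2 ^ n"
  using z2_closed2[OF z2_seq_0 z2_seq_0, where g="\<lambda>x y. 1"] by simp
lift_definition plus_z2 :: "z2 \<Rightarrow> z2 \<Rightarrow> z2" is "\<lambda>a b n. (a n + b n) mod 2 ^ n"
  by (rule z2_closed2) (simp_all add: mod_add_eq)
lift_definition uminus_z2 :: "z2 \<Rightarrow> z2" is "\<lambda>a n. (- a n) mod 2 ^ n"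
  by (rule z2_closed2[where g="\<lambda>x y. - x", OF _ z2_seq_0]) (simp_all add: mod_minus_eq)
lift_definition minus_z2 :: "z2 \<Rightarrow> z2 \<Rightarrow> z2" is "\<lambda>a b n. (a n - b n) mod 2 ^ n"
  by (rule z2_closed2) (simp_all add: mod_diff_eq)
lift_definition times_z2 :: "z2 \<Rightarrow> z2 \<Rightarrow> z2" is "\<lambda>a b n. (a n * b n) mod 2 ^ n"
  by (rule z2_closed2) (simp_all add: mod_mult_eq)

instance
proof
  fix a b c :: z2
  show "a + b + c = a + (b + c)"
    by transfer (simp add: mod_add_left_eq mod_add_right_eq add.assoc)
  show "a + b = b + a" by transfer (simp add: add.commute)
  show "0 + a = a" by transfer (simp add: z2_seq_mod)
  show "- a + a = 0" by transfer (simp add: mod_add_left_eq)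
  show "a - b = a + - b" by transfer (simp add: mod_add_right_eq)
  show "a * b * c = a * (b * c)"
    by transfer (simp add: mod_mult_left_eq mod_mult_right_eq mult.assoc)
  show "a * b = b * a" by transfer (simp add: mult.commute)
  show "1 * a = a"
  proof transfer
    fix a :: "nat \<Rightarrow> int"
    assume "z2_seq a"
    then show "(\<lambda>n. 1 mod 2 ^ n * a n mod 2 ^ n) = a"
      unfolding fun_eq_iff by (simp only: mod_mult_left_eq) (simp add: z2_seq_mod)
  qed
  show "(a + b) * c = a * c + b * c"
    by transfer (simp add: mod_mult_left_eq mod_add_eq distrib_right)
  show "(0::z2) \<noteq> 1"
  proof transfer
    have "(1::int) mod 2 ^ 1 \<noteq> 0" by simp
    then show "(\<lambda>n. 0::int) \<noteq> (\<lambda>n. 1 mod 2 ^ n)" by metis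
  qed
qed

end
lift_definition red :: "nat \<Rightarrow> z2 \<Rightarrow> int" is "\<lambda>n s. s n" .

definition v2 :: "z2 \<Rightarrow> enat" where
  "v2 y = (if y = 0 then \<infinity> else enat (GREATEST m. (2::z2) ^ m dvd y))"

text \<open>Elements of Z/2^n Z are represented by their residues in {0..<2^n}.\<close>
definition fn :: "z2 poly \<Rightarrow> nat \<Rightarrow> int \<Rightarrow> int" where
  "fn f n r = red n (poly f (of_int r))"

primrec piter :: "z2 poly \<Rightarrow> nat \<Rightarrow> z2 poly" where
  "piter f 0 = [:0, 1:]"
| "piter f (Suc k) = pcompose f (piter f k)"

text \<open>A cycle of f_n, as the set of its points (a periodic orbit); its length is its cardinality.\<close>
definition is_cycle :: "z2 poly \<Rightarrow> nat \<Rightarrow> int set \<Rightarrow> bool" where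
  "is_cycle f n C \<longleftrightarrow> (\<exists>x k. 0 < k \<and> x \<in> {0..<2^n} \<and> (fn f n ^^ k) x = x \<and>
       C = {(fn f n ^^ i) x | i. i < k})"

definition above :: "z2 poly \<Rightarrow> nat \<Rightarrow> int set \<Rightarrow> nat \<Rightarrow> int set \<Rightarrow> bool" where
  "above f n C m D \<longleftrightarrow> n \<le> m \<and> is_cycle f m D \<and> (\<lambda>y. y mod 2^n) ` D \<subseteq> C"

definition lifts :: "z2 poly \<Rightarrow> nat \<Rightarrow> int set \<Rightarrow> int set set" where
  "lifts f n C = {D. above f n C (Suc n) D}"

definition grows :: "z2 poly \<Rightarrow> nat \<Rightarrow> int set \<Rightarrow> bool" where
  "grows f n C \<longleftrightarrow> (\<exists>D. lifts f n C = {D} \<and> card D = 2 * card C)"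

definition splits :: "z2 poly \<Rightarrow> nat \<Rightarrow> int set \<Rightarrow> bool" where
  "splits f n C \<longleftrightarrow> card (lifts f n C) = 2 \<and> (\<forall>D \<in> lifts f n C. card D = card C)"

text \<open>Value at x of the formal derivative of p (written out, since pderiv in the library
  requires a ring without zero divisors type class).\<close>
definition deriv_at :: "z2 poly \<Rightarrow> z2 \<Rightarrow> z2" where
  "deriv_at p x = (\<Sum>i\<le>degree p. of_nat i * coeff p i * x ^ (i - 1))"

text \<open>a_n(x) = (f^k)'(x) and b_n(x) = (f^k(x) - x)/2^n, k the length of the cycle C at level n.\<close>
definition acoef :: "z2 poly \<Rightarrow> nat \<Rightarrow> int set \<Rightarrow> z2 \<Rightarrow> z2" where
  "acoef f n C x = deriv_at (piter f (card C)) x"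

definition bcoef :: "z2 poly \<Rightarrow> nat \<Rightarrow> int set \<Rightarrow> z2 \<Rightarrow> z2" where
  "bcoef f n C x = (THE y. poly (piter f (card C)) x - x = 2 ^ n * y)"

definition Aval :: "z2 poly \<Rightarrow> nat \<Rightarrow> int set \<Rightarrow> z2 \<Rightarrow> enat" where
  "Aval f n C x = v2 (acoef f n C x - 1)"

definition Bval :: "z2 poly \<Rightarrow> nat \<Rightarrow> int set \<Rightarrow> z2 \<Rightarrow> enat" where
  "Bval f n C x = v2 (bcoef f n C x)"

definition strongly_grows :: "z2 poly \<Rightarrow> nat \<Rightarrow> int set \<Rightarrow> bool" where
  "strongly_grows f n C \<longleftrightarrow> (\<forall>x. red n x \<in> C \<longrightarrow>
      (4::z2) dvd (acoef f n C x - 1) \<and> \<not> (2::z2) dvd bcoef f n C x)"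

definition strongly_splits :: "z2 poly \<Rightarrow> nat \<Rightarrow> int set \<Rightarrow> bool" where
  "strongly_splits f n C \<longleftrightarrow> (\<forall>x. red n x \<in> C \<longrightarrow>
      (4::z2) dvd (acoef f n C x - 1) \<and> (2::z2) dvd bcoef f n C x)"

end

theory Submission
  imports Defs
begin


lemma red_range: "0 \<le> red n y \<and> red n y < 2 ^ n"
  by transfer (simp add: z2_seq_def)

lemma z2_seq_mod_le: "z2_seq s \<Longrightarrow> j \<le> m \<Longrightarrow> s m mod 2 ^ j = s j"
proof (induction m)
  case 0
  then have "0 \<le> s 0" "s 0 < 1" unfolding z2_seq_def by (metis power_0)+
  then show ?case using 0 by simp
next
  case (Suc m)
  show ?case
  proof (cases "j = Suc m")
    case True then show ?thesis using Suc.prems z2_seq_mod[of s "Suc m"] by simp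
  next
    case False
    then have "j \<le> m" using Suc by simp
    have "s (Suc m) mod 2 ^ j = s (Suc m) mod 2 ^ m mod 2 ^ j"
      using \<open>j \<le> m\<close> by (simp add: mod_mod_cancel le_imp_power_dvd)
    also have "\<dots> = s m mod 2 ^ j" using Suc.prems by (simp add: z2_seq_def)
    finally show ?thesis using Suc \<open>j \<le> m\<close> by simp
  qed
qed

lemma red_mod: "j \<le> m \<Longrightarrow> red m y mod 2 ^ j = red j y"
  by transfer (rule z2_seq_mod_le)

lemma red_add: "red n (a + b) = (red n a + red n b) mod 2 ^ n"
  by transfer simp
lemma red_diff: "red n (a - b) = (red n a - red n b) mod 2 ^ n"
  by transfer simp
lemma red_minus: "red n (- a) = (- red n a) mod 2 ^ n"
  by transfer simp
lemma red_mult: "red n (a * b) = (red n a * red n b) mod 2 ^ n"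
  by transfer simp
lemma red_one: "red n 1 = 1 mod 2 ^ n"
  by transfer simp
lemma red_zero: "red n 0 = 0"
  by transfer simp

lemma z2_eqI: "(\<And>n. red n a = red n b) \<Longrightarrow> a = b"
  by transfer auto

lemma red_self_mod: "red n y mod 2 ^ n = red n y"
  using red_range[of n y] by simp

lemma red_of_nat: "red n (of_nat k) = int k mod 2 ^ n"
proof (induction k)
  case 0 then show ?case by (simp add: red_zero)
next
  case (Suc k)
  then show ?case by (simp add: red_add red_one mod_add_right_eq mod_add_left_eq)
qed

lemma red_of_int: "red n (of_int r) = r mod 2 ^ n"
proof (cases "r \<ge> 0")
  case True
  then obtain k where "r = int k" by (metis nonneg_eq_int)
  then show ?thesis by (simp add: red_of_nat)
next
  case False
  obtain k where "r = - int k" by (rule that[of "nat (-r)"]) (use False in simp)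
  then show ?thesis by (simp add: red_minus red_of_nat mod_minus_eq)
qed

lemma red_power: "red n (a ^ k) = (red n a) ^ k mod 2 ^ n"
proof (induction k)
  case 0 then show ?case by (simp add: red_one)
next
  case (Suc k)
  then show ?case by (simp add: red_mult mod_mult_right_eq)
qed

lemma red_two_pow: "red n ((2::z2) ^ k) = 2 ^ k mod 2 ^ n"
proof -
  have "(2::z2) ^ k = of_int (2 ^ k)" by simp
  then show ?thesis by (simp only: red_of_int)
qed

lemma red_eq_iff_mod: "red n a = red n b \<longleftrightarrow> red n (a - b) = 0"
proof -
  have "red n (a - b) = 0 \<longleftrightarrow> (red n a - red n b) mod 2 ^ n = 0" by (simp add: red_diff)
  also have "\<dots> \<longleftrightarrow> red n a mod 2^n = red n b mod 2^n" by (simp add: mod_eq_dvd_iff dvd_eq_mod_eq_0)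
  also have "\<dots> \<longleftrightarrow> red n a = red n b" by (simp add: red_self_mod)
  finally show ?thesis by simp
qed


lemma dvd_red_zero: "(2::z2) ^ j dvd y \<Longrightarrow> red j y = 0"
  by (auto simp: red_mult red_two_pow)

lemma red_zero_dvd:
  assumes "red j y = 0" shows "(2::z2) ^ j dvd y"
proof -
  define s where "s = Rep_z2 y"
  have sq: "z2_seq s" using Rep_z2 s_def by simp
  have rs: "red m y = s m" for m unfolding s_def by transfer simp
  have sj: "s j = 0" using assms rs by simp
  have d: "2 ^ j dvd s (m + j)" for m
  proof -
    have "s (m + j) mod 2 ^ j = s j" using z2_seq_mod_le[OF sq] by simp
    then show ?thesis using sj by (simp add: dvd_eq_mod_eq_0)
  qed
  define c where "c m = s (m + j) div 2 ^ j" for m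
  have sc: "s (m + j) = 2 ^ j * c m" for m using d[of m] unfolding c_def by simp
  have "z2_seq c"
    unfolding z2_seq_def
  proof (intro allI conjI)
    fix m
    have r: "0 \<le> s (m + j)" "s (m + j) < 2 ^ (m + j)" using sq unfolding z2_seq_def by auto
    show "0 \<le> c m" using r(1) sc[of m] by (simp add: zero_le_mult_iff)
    show "c m < 2 ^ m"
    proof -
      have "2 ^ j * c m < 2 ^ j * 2 ^ m" using r(2) sc[of m] by (simp add: power_add)
      then show ?thesis by simp
    qed
    have "s (Suc m + j) mod 2 ^ (m + j) = s (m + j)"
      using z2_seq_mod_le[OF sq, of "m + j" "Suc m + j"] by simp
    then have "(2 ^ j * c (Suc m)) mod (2 ^ j * 2 ^ m) = 2 ^ j * c m"
      using sc[of m] sc[of "Suc m"] by (simp add: power_add mult.commute)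
    then have "2 ^ j * (c (Suc m) mod 2 ^ m) = 2 ^ j * c m"
      by (simp add: mod_mult_mult1)
    then show "c (Suc m) mod 2 ^ m = c m" by simp
  qed
  define cz where "cz = Abs_z2 c"
  have rc: "red m cz = c m" for m
    unfolding cz_def using \<open>z2_seq c\<close> by (simp add: red.rep_eq Abs_z2_inverse)
  have "y = 2 ^ j * cz"
  proof (rule z2_eqI)
    fix m
    have "red m (2 ^ j * cz) = (2 ^ j mod 2 ^ m * c m) mod 2 ^ m"
      by (simp add: red_mult red_two_pow rc)
    also have "\<dots> = (2 ^ j * c m) mod 2 ^ m" by (simp add: mod_mult_left_eq)
    also have "\<dots> = s (m + j) mod 2 ^ m" using sc by simp
    also have "\<dots> = s m" using z2_seq_mod_le[OF sq, of m "m + j"] by simp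
    finally show "red m y = red m (2 ^ j * cz)" using rs by simp
  qed
  then show ?thesis by simp
qed

lemma dvd_iff_red: "(2::z2) ^ j dvd y \<longleftrightarrow> red j y = 0"
  using dvd_red_zero red_zero_dvd by blast

lemma all_red_zero: "(\<And>N. red N y = 0) \<Longrightarrow> y = 0"
  by (rule z2_eqI) (simp add: red_zero)

lemma all_dvd_zero: "(\<And>N. (2::z2) ^ N dvd y) \<Longrightarrow> y = 0"
  using all_red_zero dvd_iff_red by blast

lemma two_mult_zero:
  assumes "2 * (y::z2) = 0" shows "y = 0"
proof (rule all_red_zero)
  fix m
  show "red m y = 0"
  proof (cases "m = 0")
    case True then show ?thesis using red_range[of 0 y] by simp
  next
    case False
    have "red (Suc m) (2 * y) = 0" using assms by (simp add: red_zero)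
    moreover have "red (Suc m) 2 = 2" using red_two_pow[of "Suc m" 1] False by simp
    ultimately have "(2 * red (Suc m) y) mod (2 * 2 ^ m) = 0"
      by (simp add: red_mult mod_mult_left_eq)
    then have "2 * (red (Suc m) y mod 2 ^ m) = 0"
      by (simp add: mod_mult_mult1)
    then have "red (Suc m) y mod 2 ^ m = 0" by simp
    then show "red m y = 0" using red_mod[of m "Suc m" y] by simp
  qed
qed

lemma two_pow_cancel:
  assumes "(2::z2) ^ j * y = 2 ^ j * y'" shows "y = y'"
  using assms
proof (induction j arbitrary: y y')
  case 0 then show ?case by simp
next
  case (Suc j)
  then have "2 ^ j * (2 * y) = 2 ^ j * (2 * y')" by (simp add: algebra_simps)
  then have "2 * y = 2 * y'" using Suc.IH by blast
  then have "2 * (y - y') = 0" by (simp add: algebra_simps)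
  then have "y - y' = 0" by (rule two_mult_zero)
  then show ?case by simp
qed

lemma pow_dvd_cancel: "(2::z2) ^ (j + i) dvd 2 ^ i * y \<longleftrightarrow> 2 ^ j dvd y"
proof
  assume "2 ^ (j + i) dvd 2 ^ i * y"
  then obtain c where "2 ^ i * y = 2 ^ (j + i) * c" by blast
  then have "2 ^ i * y = 2 ^ i * (2 ^ j * c)" by (simp add: power_add algebra_simps)
  then have "y = 2 ^ j * c" by (rule two_pow_cancel)
  then show "2 ^ j dvd y" by simp
next
  assume "2 ^ j dvd y"
  then obtain c where "y = 2 ^ j * c" by blast
  then have "2 ^ i * y = 2 ^ (j + i) * c" by (simp add: power_add algebra_simps)
  then show "2 ^ (j + i) dvd 2 ^ i * y" by simp
qed

lemma pow_dvd_mono: "i \<le> j \<Longrightarrow> (2::z2) ^ j dvd y \<Longrightarrow> 2 ^ i dvd y"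
  using le_imp_power_dvd dvd_trans by blast

lemma odd_iff_red1: "\<not> (2::z2) dvd u \<longleftrightarrow> red 1 u = 1"
proof -
  have "(2::z2) dvd u \<longleftrightarrow> red 1 u = 0" using dvd_iff_red[of 1 u] by simp
  moreover have "red 1 u = 0 \<or> red 1 u = 1" using red_range[of 1 u] by auto
  ultimately show ?thesis by auto
qed

lemma odd_mult: "\<not> (2::z2) dvd u * v \<longleftrightarrow> \<not> 2 dvd u \<and> \<not> 2 dvd v"
proof -
  have "red 1 (u * v) = (red 1 u * red 1 v) mod 2" by (simp add: red_mult)
  moreover have "red 1 u = 0 \<or> red 1 u = 1" "red 1 v = 0 \<or> red 1 v = 1"
    using red_range[of 1 u] red_range[of 1 v] by auto
  ultimately show ?thesis unfolding odd_iff_red1 by auto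
qed

lemma odd_cancel_dvd:
  assumes "\<not> (2::z2) dvd u"
  shows "(2::z2) ^ j dvd u * y \<longleftrightarrow> 2 ^ j dvd y"
proof (cases "j = 0")
  case True then show ?thesis by simp
next
  case False
  have "red j u mod 2 = red 1 u" using red_mod[of 1 j u] False by simp
  then have "odd (red j u)" using assms odd_iff_red1 by (simp add: odd_iff_mod_2_eq_one)
  then have cop: "coprime ((2::int) ^ j) (red j u)" by simp
  have "2 ^ j dvd u * y \<longleftrightarrow> (red j u * red j y) mod 2 ^ j = 0"
    by (simp add: dvd_iff_red red_mult)
  also have "\<dots> \<longleftrightarrow> 2 ^ j dvd red j u * red j y" by (simp add: dvd_eq_mod_eq_0)
  also have "\<dots> \<longleftrightarrow> 2 ^ j dvd red j y" using cop by (simp add: coprime_dvd_mult_right_iff)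
  also have "\<dots> \<longleftrightarrow> red j y = 0"
  proof -
    have "0 \<le> red j y" "red j y < 2 ^ j" using red_range by auto
    then show ?thesis by (auto simp: zdvd_not_zless dest: zdvd_imp_le)
  qed
  also have "\<dots> \<longleftrightarrow> 2 ^ j dvd y" by (simp add: dvd_iff_red)
  finally show ?thesis .
qed

lemma red_eq_iff_dvd: "red n a = red n b \<longleftrightarrow> (2::z2) ^ n dvd a - b"
  by (simp add: red_eq_iff_mod dvd_iff_red)

lemma red_of_int_red: "red n (of_int (red n y)) = red n y"
  by (simp add: red_of_int red_self_mod)


lemma pow_taylor:
  fixes x h :: "'a::comm_ring_1"
  shows "\<exists>Q. (x + h) ^ i = x ^ i + of_nat i * h * x ^ (i - 1) + h ^ 2 * Q"
proof (induction i)
  case 0 then show ?case by (rule exI[of _ 0]) simp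
next
  case (Suc i)
  then obtain Q where Q: "(x + h) ^ i = x ^ i + of_nat i * h * x ^ (i - 1) + h ^ 2 * Q" by blast
  have xi: "of_nat i * x ^ (i - 1) * x = of_nat i * x ^ i"
    by (cases i) (simp_all add: mult.commute)
  have "(x + h) ^ Suc i = (x + h) * (x ^ i + of_nat i * h * x ^ (i - 1) + h ^ 2 * Q)"
    using Q by simp
  also have "\<dots> = x ^ Suc i + of_nat (Suc i) * h * x ^ (Suc i - 1)
      + h ^ 2 * (of_nat i * x ^ (i - 1) + (x + h) * Q)"
    using xi by (simp add: algebra_simps power2_eq_square)
  finally show ?case by blast
qed

lemma poly_taylor:
  "\<exists>Q. poly p (x + h) = poly p x + h * deriv_at p x + h ^ 2 * Q"
proof -
  have "\<forall>i. \<exists>Q. (x + h) ^ i = x ^ i + of_nat i * h * x ^ (i - 1) + h ^ 2 * Q"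
    using pow_taylor by blast
  then obtain Q where Q: "\<And>i. (x + h) ^ i = x ^ i + of_nat i * h * x ^ (i - 1) + h ^ 2 * Q i"
    by metis
  have "poly p (x + h) = (\<Sum>i\<le>degree p. coeff p i * (x + h) ^ i)" by (simp add: poly_altdef)
  also have "\<dots> = (\<Sum>i\<le>degree p. coeff p i * x ^ i + h * (of_nat i * coeff p i * x ^ (i - 1))
      + h ^ 2 * (coeff p i * Q i))"
    by (rule sum.cong[OF refl]) (subst Q, simp add: algebra_simps)
  also have "\<dots> = poly p x + h * deriv_at p x + h ^ 2 * (\<Sum>i\<le>degree p. coeff p i * Q i)"
    by (simp add: sum.distrib sum_distrib_left poly_altdef deriv_at_def)
  finally show ?thesis by blast
qed

lemma pow_diff_dvd:
  fixes x h :: "'a::comm_ring_1"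
  shows "h dvd (x + h) ^ i - x ^ i"
proof -
  obtain Q where "(x + h) ^ i = x ^ i + of_nat i * h * x ^ (i - 1) + h ^ 2 * Q"
    using pow_taylor by blast
  then have "(x + h) ^ i - x ^ i = h * (of_nat i * x ^ (i - 1) + h * Q)"
    by (simp add: algebra_simps power2_eq_square)
  then show ?thesis by simp
qed

lemma deriv_diff_dvd: "h dvd deriv_at p (x + h) - deriv_at p x"
proof -
  have "deriv_at p (x + h) - deriv_at p x =
      (\<Sum>i\<le>degree p. of_nat i * coeff p i * ((x + h) ^ (i - 1) - x ^ (i - 1)))"
    by (simp add: deriv_at_def sum_subtractf algebra_simps)
  also have "h dvd \<dots>"
    by (rule dvd_sum) (simp add: pow_diff_dvd)
  finally show ?thesis .
qed

lemma poly_diff_dvd: "y - x dvd poly p y - poly p (x::z2)"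
proof -
  obtain Q where "poly p (x + (y - x)) = poly p x + (y - x) * deriv_at p x + (y - x) ^ 2 * Q"
    using poly_taylor by blast
  then have "poly p y - poly p x = (y - x) * (deriv_at p x + (y - x) * Q)"
    by (simp add: algebra_simps power2_eq_square)
  then show ?thesis by simp
qed

lemma deriv_unique:
  assumes "\<And>h. \<exists>Q. poly p (x + h) = poly p x + h * d + h ^ 2 * Q"
  shows "d = deriv_at p x"
proof -
  have "(2::z2) ^ N dvd d - deriv_at p x" for N
  proof -
    obtain Q where Q: "poly p (x + 2 ^ N) = poly p x + 2 ^ N * d + (2 ^ N) ^ 2 * Q"
      using assms by blast
    obtain Q' where Q': "poly p (x + 2 ^ N) = poly p x + 2 ^ N * deriv_at p x + (2 ^ N) ^ 2 * Q'"
      using poly_taylor by blast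
    have "2 ^ N * (d - deriv_at p x) = 2 ^ N * (2 ^ N * (Q' - Q))"
      using Q Q' by (simp add: algebra_simps power2_eq_square)
    then have "d - deriv_at p x = 2 ^ N * (Q' - Q)" by (rule two_pow_cancel)
    then show ?thesis by simp
  qed
  then have "d - deriv_at p x = 0" by (rule all_dvd_zero)
  then show ?thesis by simp
qed

lemma chain_rule:
  assumes "\<And>y. poly r y = poly p (poly q y)"
  shows "deriv_at r x = deriv_at p (poly q x) * deriv_at q x"
proof (rule deriv_unique[symmetric])
  fix h
  obtain Q1 where Q1: "poly q (x + h) = poly q x + h * deriv_at q x + h ^ 2 * Q1"
    using poly_taylor by blast
  define H where "H = h * deriv_at q x + h ^ 2 * Q1"
  obtain Q2 where Q2: "poly p (poly q x + H) = poly p (poly q x) + H * deriv_at p (poly q x) + H ^ 2 * Q2"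
    using poly_taylor by blast
  have "poly r (x + h) = poly p (poly q x + H)" using assms Q1 H_def by (simp add: add.assoc)
  also have "\<dots> = poly p (poly q x) + H * deriv_at p (poly q x) + H ^ 2 * Q2" by (rule Q2)
  also have "\<dots> = poly r x + h * (deriv_at p (poly q x) * deriv_at q x)
     + h ^ 2 * (Q1 * deriv_at p (poly q x) + (deriv_at q x + h * Q1) ^ 2 * Q2)"
    unfolding assms H_def by (simp add: algebra_simps power2_eq_square)
  finally show "\<exists>Q. poly r (x + h) = poly r x + h * (deriv_at p (poly q x) * deriv_at q x) + h ^ 2 * Q"
    by blast
qed

lemma v2_ge_iff: "enat j \<le> v2 y \<longleftrightarrow> (2::z2) ^ j dvd y"
proof (cases "y = 0")
  case True then show ?thesis by (simp add: v2_def)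
next
  case False
  obtain N where N: "\<not> (2::z2) ^ N dvd y" using all_dvd_zero False by blast
  have bnd: "\<And>m. (2::z2) ^ m dvd y \<Longrightarrow> m \<le> N"
    using N pow_dvd_mono by (metis nat_le_linear)
  have g: "(2::z2) ^ (GREATEST m. (2::z2) ^ m dvd y) dvd y"
    by (rule GreatestI_nat[where k=0 and b=N]) (simp_all add: bnd)
  have "enat j \<le> v2 y \<longleftrightarrow> j \<le> (GREATEST m. (2::z2) ^ m dvd y)"
    using False by (simp add: v2_def)
  also have "\<dots> \<longleftrightarrow> 2 ^ j dvd y"
  proof
    assume "j \<le> (GREATEST m. (2::z2) ^ m dvd y)"
    then show "2 ^ j dvd y" using g pow_dvd_mono by blast
  next
    assume "2 ^ j dvd y"
    then show "j \<le> (GREATEST m. (2::z2) ^ m dvd y)"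
      by (rule Greatest_le_nat[where b=N]) (simp_all add: bnd)
  qed
  finally show ?thesis .
qed

lemma v2_eq_iff: "v2 y = enat j \<longleftrightarrow> (2::z2) ^ j dvd y \<and> \<not> 2 ^ Suc j dvd y"
proof -
  have "v2 y = enat j \<longleftrightarrow> enat j \<le> v2 y \<and> \<not> enat (Suc j) \<le> v2 y"
    by (cases "v2 y") auto
  then show ?thesis by (simp add: v2_ge_iff)
qed

lemma v2_less_iff: "v2 y < enat j \<longleftrightarrow> \<not> (2::z2) ^ j dvd y"
  by (simp add: v2_ge_iff[symmetric] not_le)


lemma fpa: "(g ^^ (a + b)) z = (g ^^ a) ((g ^^ b) z)"
  by (simp add: funpow_add)

lemma funpow_mult_fix: "(g ^^ p) z = z \<Longrightarrow> (g ^^ (q * p)) z = z"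
  by (induction q) (simp_all add: funpow_add)

lemma funpow_mod_fix: "(g ^^ p) z = z \<Longrightarrow> (g ^^ m) z = (g ^^ (m mod p)) z"
proof -
  assume a: "(g ^^ p) z = z"
  have "(g ^^ m) z = (g ^^ (m mod p + m div p * p)) z" by simp
  also have "\<dots> = (g ^^ (m mod p)) ((g ^^ (m div p * p)) z)" by (simp only: fpa)
  also have "\<dots> = (g ^^ (m mod p)) z" using funpow_mult_fix[OF a] by simp
  finally show ?thesis .
qed

lemma funpow_swap: "(g ^^ i) ((g ^^ j) x) = (g ^^ j) ((g ^^ i) x)"
  by (metis add.commute funpow_add o_apply)

lemma funpow_back:
  assumes "(g ^^ p) x = x" "0 < p" "(g ^^ i) ((g ^^ j) x) = (g ^^ j) x"
  shows "(g ^^ i) x = x"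
proof -
  define m where "m = p * j - j"
  have mj: "m + j = p * j" unfolding m_def using assms(2) by (simp add: mult_eq_if)
  have px: "(g ^^ (p * j)) x = x" using funpow_mult_fix[OF assms(1), of j] by (simp add: mult.commute)
  have "(g ^^ m) ((g ^^ i) ((g ^^ j) x)) = (g ^^ i) ((g ^^ (m + j)) x)"
    by (simp add: funpow_add funpow_swap)
  also have "\<dots> = (g ^^ i) x" using mj px by simp
  finally have 1: "(g ^^ m) ((g ^^ i) ((g ^^ j) x)) = (g ^^ i) x" .
  have "(g ^^ m) ((g ^^ j) x) = x" using mj px fpa[where g=g and a=m and b=j and z=x] by simp
  then show ?thesis using 1 assms(3) by simp
qed

lemma cycle_facts:
  fixes g :: "'a \<Rightarrow> 'a"
  assumes k: "0 < k" and kx: "(g ^^ k) x = x" and y: "y \<in> {(g ^^ i) x | i. i < k}"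
  defines "Orb \<equiv> {(g ^^ i) x | i. i < k}"
  shows "finite Orb" "0 < card Orb" "(g ^^ card Orb) y = y"
    "\<And>i. 0 < i \<Longrightarrow> i < card Orb \<Longrightarrow> (g ^^ i) y \<noteq> y"
    "Orb = {(g ^^ i) y | i. i < card Orb}"
    "\<And>N. (g ^^ N) y = y \<Longrightarrow> card Orb dvd N"
proof -
  define p where "p = (LEAST p. 0 < p \<and> (g ^^ p) x = x)"
  have pP: "0 < p \<and> (g ^^ p) x = x" unfolding p_def by (rule LeastI[of _ k]) (simp add: k kx)
  have pk: "p \<le> k" unfolding p_def by (rule Least_le) (simp add: k kx)
  have pmin: "\<And>i. 0 < i \<Longrightarrow> i < p \<Longrightarrow> (g ^^ i) x \<noteq> x"
    unfolding p_def using not_less_Least by blast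
  have p0: "0 < p" and px: "(g ^^ p) x = x" using pP by auto
  have inj: "inj_on (\<lambda>i. (g ^^ i) x) {..<p}"
  proof (rule inj_onI)
    have *: "i = j" if "i < p" "j < p" "i \<le> j" "(g ^^ i) x = (g ^^ j) x" for i j
    proof (rule ccontr)
      assume "i \<noteq> j"
      have "(g ^^ (j - i)) ((g ^^ i) x) = (g ^^ (j - i + i)) x" by (simp only: fpa)
      then have "(g ^^ (j - i)) ((g ^^ i) x) = (g ^^ i) x" using that by simp
      then have "(g ^^ (j - i)) x = x" using funpow_back[OF px p0] by blast
      then show False using pmin[of "j - i"] that \<open>i \<noteq> j\<close> by simp
    qed
    fix i j assume "i \<in> {..<p}" "j \<in> {..<p}" "(g ^^ i) x = (g ^^ j) x"
    then show "i = j" using *[of i j] *[of j i] by (cases "i \<le> j") auto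
  qed
  have Oeq: "Orb = (\<lambda>i. (g ^^ i) x) ` {..<p}"
  proof
    show "Orb \<subseteq> (\<lambda>i. (g ^^ i) x) ` {..<p}"
    proof
      fix z assume "z \<in> Orb"
      then obtain i where "z = (g ^^ i) x" unfolding Orb_def by blast
      then have "z = (g ^^ (i mod p)) x" using funpow_mod_fix[OF px] by simp
      then show "z \<in> (\<lambda>i. (g ^^ i) x) ` {..<p}" using p0 by auto
    qed
    show "(\<lambda>i. (g ^^ i) x) ` {..<p} \<subseteq> Orb" unfolding Orb_def using pk by auto
  qed
  have cardO: "card Orb = p" using Oeq inj by (simp add: card_image)
  show "finite Orb" using Oeq by simp
  show "0 < card Orb" using cardO p0 by simp
  from y obtain j where yj: "y = (g ^^ j) x" by blast
  show py: "(g ^^ card Orb) y = y" using cardO yj px funpow_swap by metis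
  show nfix: "\<And>i. 0 < i \<Longrightarrow> i < card Orb \<Longrightarrow> (g ^^ i) y \<noteq> y"
    using funpow_back[OF px p0] pmin yj cardO by blast
  show "\<And>N. (g ^^ N) y = y \<Longrightarrow> card Orb dvd N"
  proof -
    fix N assume "(g ^^ N) y = y"
    then have "(g ^^ (N mod p)) y = y" using funpow_mod_fix[where g=g and p=p and z=y and m=N] py cardO by simp
    then have "N mod p = 0" using nfix[of "N mod p"] cardO p0 by (metis mod_less_divisor neq0_conv)
    then show "card Orb dvd N" using cardO by (simp add: dvd_eq_mod_eq_0)
  qed
  show "Orb = {(g ^^ i) y | i. i < card Orb}"
  proof
    show "{(g ^^ i) y | i. i < card Orb} \<subseteq> Orb"
    proof
      fix z assume "z \<in> {(g ^^ i) y | i. i < card Orb}"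
      then obtain i where "z = (g ^^ i) y" by blast
      then have "z = (g ^^ ((i + j) mod p)) x" using yj funpow_mod_fix[OF px, of "i + j"]
        by (simp add: funpow_add)
      then show "z \<in> Orb" using Oeq p0 by auto
    qed
    show "Orb \<subseteq> {(g ^^ i) y | i. i < card Orb}"
    proof
      fix z assume "z \<in> Orb"
      then obtain i where i: "i < p" "z = (g ^^ i) x" using Oeq by auto
      define j' where "j' = j mod p"
      have j'p: "j' < p" unfolding j'_def using p0 by simp
      have yj': "y = (g ^^ j') x" unfolding j'_def using yj funpow_mod_fix[OF px] by simp
      define m where "m = i + p - j'"
      have mj: "m + j' = i + p" unfolding m_def using j'p by simp
      have "(g ^^ m) y = (g ^^ (m + j')) x" using yj' by (simp only: fpa)
      also have "\<dots> = (g ^^ (i + p)) x" using mj by simp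
      also have "\<dots> = z" using px i by (simp only: fpa)
      finally have "(g ^^ m) y = z" .
      then have "z = (g ^^ (m mod p)) y" using funpow_mod_fix[where g=g and p=p and z=y and m=m] py cardO
        by simp
      then show "z \<in> {(g ^^ i) y | i. i < card Orb}" using cardO p0 by auto
    qed
  qed
qed


lemma piter_poly: "poly (piter f k) y = (poly f ^^ k) y"
  by (induction k arbitrary: y) (simp_all add: poly_pcompose)

lemma piter_add: "poly (piter f (a + b)) y = poly (piter f a) (poly (piter f b) y)"
  by (simp add: piter_poly funpow_add)

lemma piter_Suc': "poly (piter f (Suc k)) y = poly (piter f k) (poly f y)"
  using piter_add[of f k 1 y] by (simp add: piter_poly)

lemma red_cong_poly: "red n a = red n b \<Longrightarrow> red n (poly p a) = red n (poly p b)"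
  using poly_diff_dvd[of b a p] by (simp add: red_eq_iff_dvd) (metis dvd_trans poly_diff_dvd)

lemma fn_red: "fn f n (red n y) = red n (poly f y)"
  unfolding fn_def by (rule red_cong_poly) (simp add: red_of_int_red)

lemma fn_iter0: "(fn f n ^^ i) (red n y) = red n ((poly f ^^ i) y)"
  by (induction i) (simp_all add: fn_red)

lemma fn_iter: "(fn f n ^^ i) (red n y) = red n (poly (piter f i) y)"
  by (simp add: fn_iter0 piter_poly)

lemma red_surj: "r \<in> {0..<2 ^ n} \<Longrightarrow> red n (of_int r) = r"
  by (simp add: red_of_int)

lemma orbit_red: "{(fn f n ^^ i) (red n z) | i. i < k} = {red n (poly (piter f i) z) | i. i < k}"
  by (simp add: fn_iter)

lemma cycI:
  assumes "0 < k" "red n (poly (piter f k) z) = red n z"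
  shows "is_cycle f n {red n (poly (piter f i) z) | i. i < k}"
  unfolding is_cycle_def
  by (rule exI[of _ "red n z"], rule exI[of _ k]) (use assms red_range in \<open>simp add: fn_iter orbit_red\<close>)

lemma cyc_subset: "is_cycle f n C \<Longrightarrow> C \<subseteq> {0..<2 ^ n}"
proof
  fix r assume "is_cycle f n C" "r \<in> C"
  then obtain x k i where xk: "x \<in> {0..<2^n}" "r = (fn f n ^^ i) x"
    unfolding is_cycle_def by blast
  then have "r = (fn f n ^^ i) (red n (of_int x))" using red_surj by simp
  then have "r = red n (poly (piter f i) (of_int x))" by (simp add: fn_iter)
  then show "r \<in> {0..<2 ^ n}" using red_range by simp
qed

lemma cyc_rep: "is_cycle f n C \<Longrightarrow> r \<in> C \<Longrightarrow> red n (of_int r) = r"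
  using cyc_subset red_surj by blast

lemma cyc_facts:
  assumes "is_cycle f n C" "red n z \<in> C"
  shows "finite C" "0 < card C"
    "red n (poly (piter f (card C)) z) = red n z"
    "\<And>i. 0 < i \<Longrightarrow> i < card C \<Longrightarrow> red n (poly (piter f i) z) \<noteq> red n z"
    "C = {red n (poly (piter f i) z) | i. i < card C}"
    "\<And>N. red n (poly (piter f N) z) = red n z \<Longrightarrow> card C dvd N"
proof -
  obtain x k where xk: "0 < k" "x \<in> {0..<2^n}" "(fn f n ^^ k) x = x"
    "C = {(fn f n ^^ i) x | i. i < k}" using assms(1) unfolding is_cycle_def by blast
  note cf = cycle_facts[OF xk(1) xk(3), of "red n z", folded xk(4)]
  show "finite C" "0 < card C" using cf assms(2) by auto
  show "red n (poly (piter f (card C)) z) = red n z" using cf(3) assms(2) by (simp add: fn_iter)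
  show "\<And>i. 0 < i \<Longrightarrow> i < card C \<Longrightarrow> red n (poly (piter f i) z) \<noteq> red n z"
    using cf(4) assms(2) by (simp add: fn_iter)
  show "C = {red n (poly (piter f i) z) | i. i < card C}"
    using cf(5) assms(2) by (simp add: fn_iter)
  show "\<And>N. red n (poly (piter f N) z) = red n z \<Longrightarrow> card C dvd N"
    using cf(6) assms(2) by (simp add: fn_iter)
qed

lemma cyc_nonempty: "is_cycle f n C \<Longrightarrow> \<exists>z. red n z \<in> C"
proof -
  assume "is_cycle f n C"
  then obtain x k where xk: "0 < k" "x \<in> {0..<2^n}" "C = {(fn f n ^^ i) x | i. i < k}"
    unfolding is_cycle_def by blast
  then have "x \<in> C" by force
  then have "red n (of_int x) \<in> C" using xk(2) red_surj by simp
  then show ?thesis by blast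
qed

lemma cyc_point: "is_cycle f n C \<Longrightarrow> red n z \<in> C \<Longrightarrow> red n (poly (piter f i) z) \<in> C"
proof -
  assume a: "is_cycle f n C" "red n z \<in> C"
  have "red n (poly (piter f i) z) = red n (poly (piter f (i mod card C)) z)"
    using funpow_mod_fix[where g="fn f n" and z="red n z" and p="card C" and m=i]
      cyc_facts(3)[OF a] by (simp add: fn_iter)
  moreover have "i mod card C < card C" using cyc_facts(2)[OF a] by simp
  ultimately have "red n (poly (piter f i) z) \<in> {red n (poly (piter f i) z) | i. i < card C}"
    by blast
  then show ?thesis using cyc_facts(5)[OF a] by simp
qed

lemma cyc_eq:
  assumes "is_cycle f n C" "is_cycle f n D" "red n z \<in> C" "red n z \<in> D"
  shows "C = D"
proof -
  have "card C dvd card D" using cyc_facts(6)[OF assms(1,3)] cyc_facts(3)[OF assms(2,4)] by blast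
  moreover have "card D dvd card C" using cyc_facts(6)[OF assms(2,4)] cyc_facts(3)[OF assms(1,3)] by blast
  ultimately have "card C = card D" by (simp add: dvd_antisym)
  then show ?thesis using cyc_facts(5)[OF assms(1,3)] cyc_facts(5)[OF assms(2,4)] by simp
qed

lemma bcoef_eq:
  assumes "poly (piter f (card C)) z - z = 2 ^ n * y"
  shows "bcoef f n C z = y"
  unfolding bcoef_def
proof (rule the_equality)
  show "poly (piter f (card C)) z - z = 2 ^ n * y" by (rule assms)
  fix y' assume "poly (piter f (card C)) z - z = 2 ^ n * y'"
  then show "y' = y" using assms two_pow_cancel by metis
qed

lemma bcoef_ex:
  assumes "is_cycle f n C" "red n z \<in> C"
  shows "poly (piter f (card C)) z - z = 2 ^ n * bcoef f n C z"
proof -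
  have "(2::z2) ^ n dvd poly (piter f (card C)) z - z"
    using cyc_facts(3)[OF assms] by (simp add: red_eq_iff_dvd)
  then obtain y where y: "poly (piter f (card C)) z - z = 2 ^ n * y" by blast
  then show ?thesis using bcoef_eq[OF y] by simp
qed


lemma dvd_add_iff_z2: "(d::z2) dvd e \<Longrightarrow> (d dvd a + e \<longleftrightarrow> d dvd a)"
  by (simp add: dvd_add_left_iff)

lemma rep_shift: "red n (z + 2 ^ n * t) = red n z"
  by (simp add: red_eq_iff_dvd)

lemma b_shift:
  assumes "is_cycle f n C" "red n z \<in> C"
  shows "\<exists>Q. bcoef f n C (z + 2 ^ n * t) = bcoef f n C z + t * (acoef f n C z - 1) + 2 ^ n * t ^ 2 * Q"
proof -
  define G where "G = piter f (card C)"
  obtain Q where Q: "poly G (z + 2 ^ n * t) = poly G z + 2 ^ n * t * deriv_at G z + (2 ^ n * t) ^ 2 * Q"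
    using poly_taylor by blast
  have b: "poly G z - z = 2 ^ n * bcoef f n C z" using bcoef_ex[OF assms] G_def by simp
  have "poly G (z + 2 ^ n * t) - (z + 2 ^ n * t) =
      2 ^ n * (bcoef f n C z + t * (acoef f n C z - 1) + 2 ^ n * t ^ 2 * Q)"
    using Q b unfolding acoef_def G_def[symmetric]
    by (simp add: algebra_simps power2_eq_square power_mult_distrib)
  then show ?thesis using bcoef_eq G_def by blast
qed

lemma a_shift:
  "(2::z2) ^ n dvd acoef f n C (z + 2 ^ n * t) - acoef f n C z"
  unfolding acoef_def using deriv_diff_dvd dvd_trans dvd_triv_left by blast

lemma chain_piter1: "deriv_at (piter f (Suc k)) z = deriv_at (piter f k) (poly f z) * deriv_at f z"
  by (rule chain_rule) (simp only: piter_Suc')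

lemma chain_piter2: "deriv_at (piter f (Suc k)) z = deriv_at f (poly (piter f k) z) * deriv_at (piter f k) z"
  by (rule chain_rule) (simp add: poly_pcompose)

lemma phi_odd:
  assumes "is_cycle f n C" "red n z \<in> C" "\<not> 2 dvd acoef f n C z"
  shows "\<not> 2 dvd deriv_at f z"
proof -
  obtain k where k: "card C = Suc k" using cyc_facts(2)[OF assms(1,2)] gr0_implies_Suc by blast
  show ?thesis using assms(3) unfolding acoef_def k chain_piter1 odd_mult by simp
qed

lemma phi_rep: "is_cycle f n C \<Longrightarrow> red n z \<in> C \<Longrightarrow> red n (poly f z) \<in> C"
  using cyc_point[of f n C z 1] by (simp add: piter_poly)

lemma a_step:
  assumes "is_cycle f n C" "red n z \<in> C" "\<not> 2 dvd acoef f n C z"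
  shows "(2::z2) ^ n dvd acoef f n C (poly f z) - acoef f n C z"
proof -
  define k where "k = card C"
  define G where "G = piter f k"
  have eq: "deriv_at G (poly f z) * deriv_at f z = deriv_at f (poly G z) * deriv_at G z"
    using chain_piter1[of f k z] chain_piter2[of f k z] G_def by simp
  have b: "poly G z = z + 2 ^ n * bcoef f n C z" using bcoef_ex[OF assms(1,2)] G_def k_def
    by (simp add: algebra_simps)
  have "2 ^ n * bcoef f n C z dvd deriv_at f (poly G z) - deriv_at f z"
    using deriv_diff_dvd[of "2 ^ n * bcoef f n C z" f z] b by simp
  then have d1: "(2::z2) ^ n dvd deriv_at f (poly G z) - deriv_at f z"
    using dvd_trans dvd_triv_left by blast
  have "(deriv_at G (poly f z) - deriv_at G z) * deriv_at f z =
      (deriv_at f (poly G z) - deriv_at f z) * deriv_at G z"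
    using eq by (simp add: algebra_simps)
  moreover have "(2::z2) ^ n dvd (deriv_at f (poly G z) - deriv_at f z) * deriv_at G z"
    using d1 by (rule dvd_mult2)
  ultimately have "(2::z2) ^ n dvd deriv_at f z * (deriv_at G (poly f z) - deriv_at G z)"
    by (simp add: mult.commute)
  then show ?thesis
    using odd_cancel_dvd[OF phi_odd[OF assms]] unfolding acoef_def G_def k_def by blast
qed

lemma b_step:
  assumes "is_cycle f n C" "red n z \<in> C" "\<not> 2 dvd acoef f n C z" "j \<le> n"
  shows "(2::z2) ^ j dvd bcoef f n C (poly f z) \<longleftrightarrow> 2 ^ j dvd bcoef f n C z"
proof -
  define k where "k = card C"
  define G where "G = piter f k"
  define b where "b = bcoef f n C z"
  have bz: "poly G z = z + 2 ^ n * b" using bcoef_ex[OF assms(1,2)] G_def k_def b_def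
    by (simp add: algebra_simps)
  obtain Q where Q: "poly f (z + 2 ^ n * b) = poly f z + 2 ^ n * b * deriv_at f z + (2 ^ n * b) ^ 2 * Q"
    using poly_taylor by blast
  have "poly G (poly f z) = poly f (poly G z)" unfolding G_def
    using piter_Suc'[of f k z] by (simp add: poly_pcompose)
  then have "poly (piter f (card C)) (poly f z) - poly f z = 2 ^ n * (b * deriv_at f z + 2 ^ n * (b ^ 2 * Q))"
    using Q bz G_def k_def by (simp add: algebra_simps power2_eq_square power_mult_distrib)
  then have bf: "bcoef f n C (poly f z) = b * deriv_at f z + 2 ^ n * (b ^ 2 * Q)"
    by (rule bcoef_eq)
  have "(2::z2) ^ j dvd 2 ^ n * (b ^ 2 * Q)" using assms(4) pow_dvd_mono by (meson dvd_mult2 dvd_refl)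
  then have "2 ^ j dvd bcoef f n C (poly f z) \<longleftrightarrow> 2 ^ j dvd b * deriv_at f z"
    unfolding bf by (rule dvd_add_iff_z2)
  also have "\<dots> \<longleftrightarrow> 2 ^ j dvd b" using odd_cancel_dvd[OF phi_odd[OF assms(1-3)]]
    by (simp add: mult.commute)
  finally show ?thesis unfolding b_def .
qed

definition compat :: "z2 poly \<Rightarrow> nat \<Rightarrow> int set \<Rightarrow> z2 \<Rightarrow> z2 \<Rightarrow> bool" where
  "compat f n C z w \<longleftrightarrow> (2::z2) ^ n dvd acoef f n C z - acoef f n C w \<and>
     (\<forall>j\<le>n. (2::z2) ^ j dvd acoef f n C z - 1 \<longrightarrow>
        ((2::z2) ^ j dvd bcoef f n C z \<longleftrightarrow> 2 ^ j dvd bcoef f n C w))"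

lemma compat_refl: "compat f n C z z"
  unfolding compat_def by simp

lemma compat_trans:
  assumes "compat f n C z w" "compat f n C w u"
  shows "compat f n C z u"
  unfolding compat_def
proof (intro conjI allI impI)
  have d1: "(2::z2) ^ n dvd acoef f n C z - acoef f n C w" using assms(1) compat_def by blast
  have d2: "(2::z2) ^ n dvd acoef f n C w - acoef f n C u" using assms(2) compat_def by blast
  have "acoef f n C z - acoef f n C u = (acoef f n C z - acoef f n C w) + (acoef f n C w - acoef f n C u)"
    by simp
  then show d3: "(2::z2) ^ n dvd acoef f n C z - acoef f n C u" using d1 d2 by (metis dvd_add)
  fix j assume j: "j \<le> n" "(2::z2) ^ j dvd acoef f n C z - 1"
  have "(2::z2) ^ j dvd acoef f n C z - acoef f n C w" using d1 j(1) pow_dvd_mono by blast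
  moreover have "acoef f n C w - 1 = (acoef f n C z - 1) - (acoef f n C z - acoef f n C w)" by simp
  ultimately have "(2::z2) ^ j dvd acoef f n C w - 1" using j(2) by (metis dvd_diff)
  then show "((2::z2) ^ j dvd bcoef f n C z \<longleftrightarrow> 2 ^ j dvd bcoef f n C u)"
    using assms j unfolding compat_def by blast
qed

lemma compat_sym:
  assumes "compat f n C z w" shows "compat f n C w z"
  unfolding compat_def
proof (intro conjI allI impI)
  have d1: "(2::z2) ^ n dvd acoef f n C z - acoef f n C w" using assms(1) compat_def by blast
  then show "(2::z2) ^ n dvd acoef f n C w - acoef f n C z"
    by (metis dvd_minus_iff minus_diff_eq)
  fix j assume j: "j \<le> n" "(2::z2) ^ j dvd acoef f n C w - 1"
  have "(2::z2) ^ j dvd acoef f n C z - acoef f n C w" using d1 j(1) pow_dvd_mono by blast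
  moreover have "acoef f n C z - 1 = (acoef f n C w - 1) + (acoef f n C z - acoef f n C w)" by simp
  ultimately have "(2::z2) ^ j dvd acoef f n C z - 1" using j(2) by (metis dvd_add)
  then show "((2::z2) ^ j dvd bcoef f n C w \<longleftrightarrow> 2 ^ j dvd bcoef f n C z)"
    using assms j unfolding compat_def by blast
qed

lemma compat_shift:
  assumes "is_cycle f n C" "red n z \<in> C"
  shows "compat f n C z (z + 2 ^ n * t)"
  unfolding compat_def
proof (intro conjI allI impI)
  show "(2::z2) ^ n dvd acoef f n C z - acoef f n C (z + 2 ^ n * t)"
    using a_shift by (metis dvd_minus_iff minus_diff_eq)
  fix j assume j: "j \<le> n" "(2::z2) ^ j dvd acoef f n C z - 1"
  obtain Q where Q: "bcoef f n C (z + 2 ^ n * t) = bcoef f n C z + (t * (acoef f n C z - 1) + 2 ^ n * t ^ 2 * Q)"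
    using b_shift[OF assms, of t] by (auto simp: add.assoc)
  have d1: "(2::z2) ^ j dvd t * (acoef f n C z - 1)" using j(2) by (rule dvd_mult)
  have "(2::z2) ^ j dvd 2 ^ n" using j(1) by (rule le_imp_power_dvd)
  then have d2: "(2::z2) ^ j dvd 2 ^ n * t ^ 2 * Q" by (intro dvd_mult2)
  have "(2::z2) ^ j dvd t * (acoef f n C z - 1) + 2 ^ n * t ^ 2 * Q" using d1 d2 by (rule dvd_add)
  then show "((2::z2) ^ j dvd bcoef f n C z \<longleftrightarrow> 2 ^ j dvd bcoef f n C (z + 2 ^ n * t))"
    unfolding Q using dvd_add_iff_z2 by blast
qed

lemma compat_phi:
  assumes "is_cycle f n C" "red n z \<in> C" "\<not> 2 dvd acoef f n C z"
  shows "compat f n C z (poly f z)"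
  unfolding compat_def
proof (intro conjI allI impI)
  show "(2::z2) ^ n dvd acoef f n C z - acoef f n C (poly f z)"
    using a_step[OF assms] by (metis dvd_minus_iff minus_diff_eq)
  fix j assume j: "j \<le> n"
  show "((2::z2) ^ j dvd bcoef f n C z \<longleftrightarrow> 2 ^ j dvd bcoef f n C (poly f z))"
    using b_step[OF assms j] by simp
qed

lemma compat_all:
  assumes C: "is_cycle f n C" and odd: "\<And>z. red n z \<in> C \<Longrightarrow> \<not> 2 dvd acoef f n C z"
    and x: "red n x \<in> C" and z: "red n z \<in> C"
  shows "compat f n C x z"
proof -
  have it: "compat f n C x (poly (piter f i) x) \<and> red n (poly (piter f i) x) \<in> C" for i
  proof (induction i)
    case 0 then show ?case using x compat_refl by simp
  next
    case (Suc i)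
    let ?y = "poly (piter f i) x"
    have py: "poly (piter f (Suc i)) x = poly f ?y" by (simp add: poly_pcompose)
    have yC: "red n ?y \<in> C" using Suc by blast
    have "compat f n C ?y (poly f ?y)" using compat_phi[OF C yC odd[OF yC]] .
    then have "compat f n C x (poly f ?y)" using Suc compat_trans by blast
    moreover have "red n (poly f ?y) \<in> C" using phi_rep[OF C yC] .
    ultimately show ?case using py by simp
  qed
  obtain i where "red n z = red n (poly (piter f i) x)" using cyc_facts(5)[OF C x] z by blast
  then have "(2::z2) ^ n dvd z - poly (piter f i) x" by (simp add: red_eq_iff_dvd)
  then obtain t where "z - poly (piter f i) x = 2 ^ n * t" by (rule dvdE)
  then have t: "z = poly (piter f i) x + 2 ^ n * t" by (simp add: algebra_simps)
  have "compat f n C (poly (piter f i) x) (poly (piter f i) x + 2 ^ n * t)"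
    using compat_shift[OF C] it by blast
  then have "compat f n C (poly (piter f i) x) z" using t by simp
  then show ?thesis using it compat_trans by blast
qed


lemma red_Suc_mod: "red (Suc n) z mod 2 ^ n = red n z"
  using red_mod[of n "Suc n" z] by simp

lemma card_S:
  assumes "C \<subseteq> {0..<2 ^ n}" "finite C"
  shows "card {r \<in> {0..<2 ^ Suc n}. r mod 2 ^ n \<in> C} = 2 * card (C :: int set)"
proof -
  let ?S = "{r \<in> {0..<2 ^ Suc n}. r mod 2 ^ n \<in> C}"
  have eq: "?S = C \<union> (\<lambda>c. c + 2 ^ n) ` C"
  proof
    show "?S \<subseteq> C \<union> (\<lambda>c. c + 2 ^ n) ` C"
    proof
      fix r assume r: "r \<in> ?S"
      show "r \<in> C \<union> (\<lambda>c. c + 2 ^ n) ` C"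
      proof (cases "r < 2 ^ n")
        case True
        then have "r mod 2 ^ n = r" using r by simp
        then show ?thesis using r by simp
      next
        case False
        have "(r - 2 ^ n) mod 2 ^ n = r - 2 ^ n" by (rule mod_pos_pos_trivial) (use False r in auto)
        moreover have "(r - 2 ^ n) mod 2 ^ n = r mod 2 ^ n" by (simp add: mod_diff_eq[symmetric])
        ultimately have "r mod 2 ^ n = r - 2 ^ n" by simp
        then have "r - 2 ^ n \<in> C" using r by simp
        then show ?thesis by (auto intro: image_eqI[of _ _ "r - 2 ^ n"])
      qed
    qed
    show "C \<union> (\<lambda>c. c + 2 ^ n) ` C \<subseteq> ?S"
    proof
      fix r assume "r \<in> C \<union> (\<lambda>c. c + 2 ^ n) ` C"
      then show "r \<in> ?S"
      proof
        assume "r \<in> C" then show ?thesis using assms(1) by (auto simp: mod_pos_pos_trivial)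
      next
        assume "r \<in> (\<lambda>c. c + 2 ^ n) ` C"
        then obtain c where c: "c \<in> C" "r = c + 2 ^ n" by blast
        then have "0 \<le> c" "c < 2 ^ n" using assms(1) by auto
        then show ?thesis using c by (auto simp: mod_pos_pos_trivial)
      qed
    qed
  qed
  have disj: "C \<inter> (\<lambda>c. c + 2 ^ n) ` C = {}"
  proof (rule ccontr)
    assume "C \<inter> (\<lambda>c. c + 2 ^ n) ` C \<noteq> {}"
    then obtain c where "c \<in> C" "c + 2 ^ n \<in> C" by blast
    then have "0 \<le> c" "c + 2 ^ n < 2 ^ n" using assms(1) by auto
    then show False by simp
  qed
  have "card ?S = card C + card ((\<lambda>c. c + 2 ^ n) ` C)"
    unfolding eq using assms(2) disj by (simp add: card_Un_disjoint)
  also have "\<dots> = 2 * card C" by (simp add: card_image)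
  finally show ?thesis .
qed

lemma above_rep:
  assumes "above f n C m D" "red m z \<in> D"
  shows "red n z \<in> C"
proof -
  have "red m z mod 2 ^ n \<in> C" using assms unfolding above_def by blast
  then show ?thesis using red_mod assms(1) unfolding above_def by simp
qed

lemma lift_struct:
  assumes C: "is_cycle f n C" and K: "0 < K"
    and per: "\<And>z. red n z \<in> C \<Longrightarrow> red (Suc n) (poly (piter f K) z) = red (Suc n) z"
    and minp: "\<And>z i. red n z \<in> C \<Longrightarrow> 0 < i \<Longrightarrow> i < K \<Longrightarrow> red (Suc n) (poly (piter f i) z) \<noteq> red (Suc n) z"
  shows "\<And>D. D \<in> lifts f n C \<Longrightarrow> card D = K"
    "card (lifts f n C) * K = 2 * card C"
    "\<And>z. red n z \<in> C \<Longrightarrow> \<exists>D \<in> lifts f n C. red (Suc n) z \<in> D"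
proof -
  define Ob where "Ob z = {red (Suc n) (poly (piter f i) z) | i. i < K}" for z
  have Ocyc: "is_cycle f (Suc n) (Ob z)" if "red n z \<in> C" for z
    unfolding Ob_def using cycI[OF K per[OF that]] .
  have zO: "red (Suc n) z \<in> Ob z" for z
    unfolding Ob_def using K by (auto intro!: exI[of _ 0])
  have Ocard: "card (Ob z) = K" if z: "red n z \<in> C" for z
  proof -
    note cf = cyc_facts[OF Ocyc[OF z] zO]
    have "card (Ob z) dvd K" using cf(6) per[OF z] by blast
    then have le: "card (Ob z) \<le> K" using K by (simp add: dvd_imp_le)
    show ?thesis
    proof (rule ccontr)
      assume "card (Ob z) \<noteq> K"
      then show False using minp[OF z cf(2)] le cf(3) by simp
    qed
  qed
  have Olift: "Ob z \<in> lifts f n C" if z: "red n z \<in> C" for z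
    unfolding lifts_def above_def
  proof (intro CollectI conjI)
    show "n \<le> Suc n" by simp
    show "is_cycle f (Suc n) (Ob z)" using Ocyc[OF z] .
    show "(\<lambda>y. y mod 2 ^ n) ` Ob z \<subseteq> C"
      unfolding Ob_def using cyc_point[OF C z] red_Suc_mod by auto
  qed
  have liftO: "\<exists>z. red n z \<in> C \<and> D = Ob z" if D: "D \<in> lifts f n C" for D
  proof -
    have ab: "above f n C (Suc n) D" using D unfolding lifts_def by simp
    then have Dc: "is_cycle f (Suc n) D" unfolding above_def by simp
    obtain z where z: "red (Suc n) z \<in> D" using cyc_nonempty[OF Dc] by blast
    have zC: "red n z \<in> C" using above_rep[OF ab z] .
    have "D = Ob z" using cyc_eq[OF Dc Ocyc[OF zC] z zO] .
    then show ?thesis using zC by blast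
  qed
  show cardD: "\<And>D. D \<in> lifts f n C \<Longrightarrow> card D = K" using liftO Ocard by blast
  show "\<And>z. red n z \<in> C \<Longrightarrow> \<exists>D \<in> lifts f n C. red (Suc n) z \<in> D"
    using Olift zO by blast
  define S where "S = {r \<in> {0..<2 ^ Suc n}. r mod 2 ^ n \<in> C}"
  have US: "\<Union>(lifts f n C) = S"
  proof
    show "\<Union>(lifts f n C) \<subseteq> S"
    proof
      fix r assume "r \<in> \<Union>(lifts f n C)"
      then obtain D where D: "D \<in> lifts f n C" "r \<in> D" by blast
      have ab: "above f n C (Suc n) D" using D unfolding lifts_def by simp
      then have "is_cycle f (Suc n) D" "(\<lambda>y. y mod 2 ^ n) ` D \<subseteq> C" unfolding above_def by auto
      then show "r \<in> S" unfolding S_def using cyc_subset D(2) by blast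
    qed
    show "S \<subseteq> \<Union>(lifts f n C)"
    proof
      fix r assume r: "r \<in> S"
      then have rr: "red (Suc n) (of_int r) = r" using red_surj unfolding S_def by simp
      have "red n (of_int r) = r mod 2 ^ n" by (simp add: red_of_int)
      then have "red n (of_int r) \<in> C" using r unfolding S_def by simp
      then show "r \<in> \<Union>(lifts f n C)" using Olift zO[of "of_int r"] rr by auto
    qed
  qed
  have finS: "finite S" unfolding S_def by (rule finite_subset[of _ "{0..<2 ^ Suc n}"]) auto
  have finL: "finite (lifts f n C)"
  proof (rule finite_subset[of _ "Pow S"])
    show "lifts f n C \<subseteq> Pow S" using US by blast
  qed (simp add: finS)
  have disj: "pairwise disjnt (lifts f n C)"
    unfolding pairwise_def disjnt_def
  proof (intro ballI impI)
    fix D D' assume D: "D \<in> lifts f n C" "D' \<in> lifts f n C" "D \<noteq> D'"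
    show "D \<inter> D' = {}"
    proof (rule ccontr)
      assume "D \<inter> D' \<noteq> {}"
      then obtain r where r: "r \<in> D" "r \<in> D'" by blast
      have c: "is_cycle f (Suc n) D" "is_cycle f (Suc n) D'" using D unfolding lifts_def above_def by auto
      have "red (Suc n) (of_int r) = r" using cyc_rep[OF c(1) r(1)] .
      then have "D = D'" using cyc_eq[OF c, of "of_int r"] r by simp
      then show False using D by simp
    qed
  qed
  have "card S = sum card (lifts f n C)"
    unfolding US[symmetric] by (rule card_Union_disjoint[OF disj]) (use finS US in \<open>meson Union_upper finite_subset\<close>)
  also have "\<dots> = card (lifts f n C) * K" using cardD by simp
  finally have "card S = card (lifts f n C) * K" .
  moreover have "card S = 2 * card C"
    unfolding S_def using card_S[OF cyc_subset[OF C] cyc_facts(1)] cyc_nonempty[OF C] C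
    by (metis cyc_facts(1))
  ultimately show "card (lifts f n C) * K = 2 * card C" by simp
qed

lemma lift_rep:
  assumes "D \<in> lifts f n C" "red (Suc n) z \<in> D"
  shows "red n z \<in> C"
  using assms above_rep unfolding lifts_def by blast

lemma lift_cycle: "D \<in> lifts f n C \<Longrightarrow> is_cycle f (Suc n) D"
  unfolding lifts_def above_def by simp

lemma split_step:
  assumes C: "is_cycle f n C" and ev: "\<And>z. red n z \<in> C \<Longrightarrow> 2 dvd bcoef f n C z"
  shows "splits f n C"
    "\<And>D. D \<in> lifts f n C \<Longrightarrow> card D = card C"
    "\<And>z. red n z \<in> C \<Longrightarrow> \<exists>D \<in> lifts f n C. red (Suc n) z \<in> D"
    "\<And>D z. D \<in> lifts f n C \<Longrightarrow> red (Suc n) z \<in> D \<Longrightarrow>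
        acoef f (Suc n) D z = acoef f n C z \<and> 2 * bcoef f (Suc n) D z = bcoef f n C z"
proof -
  have K: "0 < card C" using cyc_nonempty[OF C] cyc_facts(2)[OF C] by blast
  have per: "red (Suc n) (poly (piter f (card C)) z) = red (Suc n) z" if z: "red n z \<in> C" for z
  proof -
    obtain c where c: "bcoef f n C z = 2 * c" using ev[OF z] by blast
    have "poly (piter f (card C)) z - z = 2 ^ Suc n * c" using bcoef_ex[OF C z] c by simp
    then show ?thesis by (simp add: red_eq_iff_dvd)
  qed
  have minp: "red (Suc n) (poly (piter f i) z) \<noteq> red (Suc n) z"
    if z: "red n z \<in> C" and i: "0 < i" "i < card C" for z i
  proof
    assume "red (Suc n) (poly (piter f i) z) = red (Suc n) z"
    then have "red (Suc n) (poly (piter f i) z) mod 2 ^ n = red (Suc n) z mod 2 ^ n" by simp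
    then show False using cyc_facts(4)[OF C z i] red_Suc_mod by simp
  qed
  note ls = lift_struct[OF C K per minp]
  show cD: "\<And>D. D \<in> lifts f n C \<Longrightarrow> card D = card C" using ls(1) .
  show "\<And>z. red n z \<in> C \<Longrightarrow> \<exists>D \<in> lifts f n C. red (Suc n) z \<in> D" using ls(3) .
  show "splits f n C" unfolding splits_def using ls(1,2) K by simp
  fix D z assume D: "D \<in> lifts f n C" and z: "red (Suc n) z \<in> D"
  have zC: "red n z \<in> C" using lift_rep[OF D z] .
  show "acoef f (Suc n) D z = acoef f n C z \<and> 2 * bcoef f (Suc n) D z = bcoef f n C z"
  proof
    show "acoef f (Suc n) D z = acoef f n C z" unfolding acoef_def using cD[OF D] by simp
    obtain c where c: "bcoef f n C z = 2 * c" using ev[OF zC] by blast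
    have "poly (piter f (card D)) z - z = 2 ^ Suc n * c" using bcoef_ex[OF C zC] c cD[OF D] by simp
    then have "bcoef f (Suc n) D z = c" by (rule bcoef_eq)
    then show "2 * bcoef f (Suc n) D z = bcoef f n C z" using c by simp
  qed
qed


lemma odd_add_odd: "\<not> (2::z2) dvd x \<Longrightarrow> \<not> 2 dvd y \<Longrightarrow> 2 dvd x + y"
proof -
  assume "\<not> (2::z2) dvd x" "\<not> 2 dvd y"
  then have "red 1 x = 1" "red 1 y = 1" using odd_iff_red1 by auto
  then have "red 1 (x + y) = 0" by (simp add: red_add)
  then show ?thesis using dvd_iff_red[of 1] by simp
qed

lemma grow_step:
  assumes C: "is_cycle f n C" and n2: "2 \<le> n" and sg: "strongly_grows f n C"
  shows "grows f n C" "\<And>D. D \<in> lifts f n C \<Longrightarrow> strongly_grows f (Suc n) D"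
proof -
  define k where "k = card C"
  have k0: "0 < k" using cyc_nonempty[OF C] cyc_facts(2)[OF C] k_def by blast
  have a4: "(4::z2) dvd acoef f n C z - 1" and bo: "\<not> 2 dvd bcoef f n C z" if "red n z \<in> C" for z
    using sg that unfolding strongly_grows_def by auto
  have bz: "poly (piter f k) z = z + 2 ^ n * bcoef f n C z" if "red n z \<in> C" for z
    using bcoef_ex[OF C that] k_def by (simp add: algebra_simps)
  have wC: "red n (poly (piter f k) z) \<in> C" if "red n z \<in> C" for z
    using cyc_point[OF C that] .
  have G2: "poly (piter f (2 * k)) z = poly (piter f k) (poly (piter f k) z)" for z
    using piter_add[of f k k z] by (simp add: mult_2)
  have per: "red (Suc n) (poly (piter f (2 * k)) z) = red (Suc n) z" if z: "red n z \<in> C" for z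
  proof -
    let ?w = "poly (piter f k) z"
    have "poly (piter f (2 * k)) z - z = 2 ^ n * (bcoef f n C ?w + bcoef f n C z)"
      using G2 bz[OF z] bz[OF wC[OF z]] by (simp add: algebra_simps)
    moreover obtain c where "bcoef f n C ?w + bcoef f n C z = 2 * c"
      using odd_add_odd[OF bo[OF wC[OF z]] bo[OF z]] by blast
    ultimately have "poly (piter f (2 * k)) z - z = 2 ^ Suc n * c" by simp
    then show ?thesis by (simp add: red_eq_iff_dvd)
  qed
  have minp: "red (Suc n) (poly (piter f i) z) \<noteq> red (Suc n) z"
    if z: "red n z \<in> C" and i: "0 < i" "i < 2 * k" for z i
  proof
    assume eq: "red (Suc n) (poly (piter f i) z) = red (Suc n) z"
    then have "red (Suc n) (poly (piter f i) z) mod 2 ^ n = red (Suc n) z mod 2 ^ n" by simp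
    then have "red n (poly (piter f i) z) = red n z" using red_Suc_mod by simp
    then have "k dvd i" using cyc_facts(6)[OF C z] k_def by simp
    then have "i = k" using i by (auto elim!: dvdE)
    then have "(2::z2) ^ Suc n dvd 2 ^ n * bcoef f n C z"
      using eq bz[OF z] by (simp add: red_eq_iff_dvd)
    then have "(2::z2) ^ 1 dvd bcoef f n C z" using pow_dvd_cancel[of 1 n] by simp
    then show False using bo[OF z] by simp
  qed
  have K2: "0 < 2 * k" using k0 by simp
  have ls1: "\<And>D. D \<in> lifts f n C \<Longrightarrow> card D = 2 * k"
    using lift_struct(1)[of f n C "2 * k"] C K2 per minp by blast
  have ls2: "card (lifts f n C) * (2 * k) = 2 * card C"
    using lift_struct(2)[of f n C "2 * k"] C K2 per minp by blast
  have cl: "card (lifts f n C) = 1" using ls2 k0 k_def by simp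
  then obtain D where D: "lifts f n C = {D}" by (rule card_1_singletonE)
  show "grows f n C" unfolding grows_def using D ls1 k0 k_def by auto
  fix D assume D: "D \<in> lifts f n C"
  have cD: "card D = 2 * k" using ls1[OF D] .
  show "strongly_grows f (Suc n) D"
    unfolding strongly_grows_def
  proof (intro allI impI conjI)
    fix z assume zD: "red (Suc n) z \<in> D"
    have z: "red n z \<in> C" using lift_rep[OF D zD] .
    let ?w = "poly (piter f k) z"
    have ach: "acoef f (Suc n) D z = deriv_at (piter f k) ?w * deriv_at (piter f k) z"
      unfolding acoef_def cD by (rule chain_rule) (rule G2)
    have aw: "(4::z2) dvd deriv_at (piter f k) ?w - 1" using a4[OF wC[OF z]] k_def unfolding acoef_def by simp
    have az: "(4::z2) dvd deriv_at (piter f k) z - 1" using a4[OF z] k_def unfolding acoef_def by simp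
    have eq4: "deriv_at (piter f k) ?w * deriv_at (piter f k) z - 1 =
        (deriv_at (piter f k) ?w - 1) * deriv_at (piter f k) z + (deriv_at (piter f k) z - 1)"
      by (simp add: algebra_simps)
    show "(4::z2) dvd acoef f (Suc n) D z - 1" unfolding ach eq4
      by (intro dvd_add dvd_mult2 aw az)
    define b where "b = bcoef f n C z"
    obtain Q where Q: "bcoef f n C (z + 2 ^ n * b) = b + b * (acoef f n C z - 1) + 2 ^ n * b ^ 2 * Q"
      using b_shift[OF C z, of b] b_def by blast
    obtain u where u: "acoef f n C z - 1 = 4 * u" using a4[OF z] by blast
    define m where "m = n - 1"
    have m: "n = Suc m" "1 \<le> m" using n2 unfolding m_def by auto
    have wz: "?w = z + 2 ^ n * b" using bz[OF z] b_def by simp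
    have "poly (piter f (card D)) z - z = 2 ^ n * (bcoef f n C ?w + b)"
      unfolding cD G2[of z] using bz[OF z] bz[OF wC[OF z]] b_def by (simp add: algebra_simps)
    also have "\<dots> = 2 ^ Suc n * (b + 2 * u * b + 2 ^ m * b ^ 2 * Q)"
      unfolding wz Q u by (simp add: m(1) algebra_simps)
    finally have "bcoef f (Suc n) D z = b + 2 * u * b + 2 ^ m * b ^ 2 * Q" by (rule bcoef_eq)
    moreover have "(2::z2) dvd 2 * u * b + 2 ^ m * b ^ 2 * Q"
    proof -
      have "(2::z2) ^ 1 dvd 2 ^ m" using m(2) by (rule le_imp_power_dvd)
      then have "(2::z2) dvd 2 ^ m" by simp
      then show ?thesis by (simp add: dvd_add dvd_mult2)
    qed
    ultimately show "\<not> 2 dvd bcoef f (Suc n) D z"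
      using bo[OF z] b_def by (simp add: add.assoc dvd_add_iff_z2)
  qed
qed

lemma cyc_image:
  assumes D: "is_cycle f m D" and l: "l \<le> m"
  shows "is_cycle f l ((\<lambda>y. y mod 2 ^ l) ` D)"
proof -
  obtain z where z: "red m z \<in> D" using cyc_nonempty[OF D] by blast
  note cf = cyc_facts[OF D z]
  have s1: "{red q (poly (piter f i) z) | i. i < N} = (\<lambda>i. red q (poly (piter f i) z)) ` {..<N}" for q N
    by auto
  have "(\<lambda>y. y mod 2 ^ l) ` D = (\<lambda>y. y mod 2 ^ l) ` (\<lambda>i. red m (poly (piter f i) z)) ` {..<card D}"
    using cf(5) s1 by metis
  also have "\<dots> = (\<lambda>i. red l (poly (piter f i) z)) ` {..<card D}"
    by (simp add: image_image red_mod[OF l])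
  finally have eq: "(\<lambda>y. y mod 2 ^ l) ` D = {red l (poly (piter f i) z) | i. i < card D}"
    using s1 by simp
  have "red l (poly (piter f (card D)) z) = red l z"
    using cf(3) red_mod[OF l] by metis
  then show ?thesis unfolding eq using cycI cf(2) by blast
qed

lemma above_refl_eq:
  assumes C: "is_cycle f n C" and ab: "above f n C n D"
  shows "D = C"
proof -
  have Dc: "is_cycle f n D" using ab unfolding above_def by simp
  obtain z where z: "red n z \<in> D" using cyc_nonempty[OF Dc] by blast
  have "red n z \<in> C" using above_rep[OF ab z] .
  then show ?thesis using cyc_eq[OF Dc C z] by simp
qed

lemma above_split:
  assumes ab: "above f n C m D" and l: "n \<le> l" "l \<le> m"
  shows "above f n C l ((\<lambda>y. y mod 2 ^ l) ` D) \<and> above f l ((\<lambda>y. y mod 2 ^ l) ` D) m D"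
proof -
  have D: "is_cycle f m D" and sub: "(\<lambda>y. y mod 2 ^ n) ` D \<subseteq> C" using ab unfolding above_def by auto
  have E: "is_cycle f l ((\<lambda>y. y mod 2 ^ l) ` D)" using cyc_image[OF D l(2)] .
  have mm: "y mod 2 ^ l mod 2 ^ n = y mod 2 ^ n" for y :: int
    using l(1) by (simp add: mod_mod_cancel le_imp_power_dvd)
  have "(\<lambda>y. y mod 2 ^ n) ` (\<lambda>y. y mod 2 ^ l) ` D \<subseteq> C" using sub mm by auto
  then show ?thesis using E D l unfolding above_def by auto
qed

lemma above_lift: "above f m E (Suc m) D \<longleftrightarrow> D \<in> lifts f m E"
  unfolding lifts_def by simp

lemma split_iter:
  assumes C0: "is_cycle f m0 C0" and ev: "\<And>z. red m0 z \<in> C0 \<Longrightarrow> (2::z2) ^ \<beta> dvd bcoef f m0 C0 z"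
  shows "j \<le> \<beta> \<Longrightarrow> above f m0 C0 (m0 + j) D \<Longrightarrow> card D = card C0 \<and> is_cycle f (m0 + j) D \<and>
     (\<forall>z. red (m0 + j) z \<in> D \<longrightarrow> acoef f (m0 + j) D z = acoef f m0 C0 z \<and>
        2 ^ j * bcoef f (m0 + j) D z = bcoef f m0 C0 z)"
proof (induction j arbitrary: D)
  case 0
  then have "D = C0" using above_refl_eq[OF C0] by simp
  then show ?case using C0 by simp
next
  case (Suc j)
  define E where "E = (\<lambda>y. y mod 2 ^ (m0 + j)) ` D"
  have sp: "above f m0 C0 (m0 + j) E \<and> above f (m0 + j) E (Suc (m0 + j)) D"
    using above_split[of f m0 C0 "m0 + Suc j" D "m0 + j"] Suc.prems unfolding E_def by simp
  have IH: "card E = card C0 \<and> is_cycle f (m0 + j) E \<and>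
     (\<forall>z. red (m0 + j) z \<in> E \<longrightarrow> acoef f (m0 + j) E z = acoef f m0 C0 z \<and>
        2 ^ j * bcoef f (m0 + j) E z = bcoef f m0 C0 z)"
    using Suc.IH[of E] Suc.prems sp by simp
  have DL: "D \<in> lifts f (m0 + j) E" using sp above_lift by blast
  have zE0: "red m0 z \<in> C0" if "red (m0 + j) z \<in> E" for z
    using above_rep sp that by blast
  have evE: "2 dvd bcoef f (m0 + j) E z" if z: "red (m0 + j) z \<in> E" for z
  proof -
    have "(2::z2) ^ \<beta> dvd 2 ^ j * bcoef f (m0 + j) E z" using IH z ev[OF zE0[OF z]] by simp
    moreover have "1 + j \<le> \<beta>" using Suc.prems(1) by simp
    ultimately have "(2::z2) ^ (1 + j) dvd 2 ^ j * bcoef f (m0 + j) E z" using pow_dvd_mono by blast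
    then show ?thesis using pow_dvd_cancel[of 1 j] by simp
  qed
  have Ecyc: "is_cycle f (m0 + j) E" using IH by blast
  have ss2: "card D = card E" using split_step(2)[of f "m0 + j" E D] Ecyc evE DL by blast
  show ?case
  proof (intro conjI allI impI)
    show "card D = card C0" using ss2 IH by simp
    show "is_cycle f (m0 + Suc j) D" using lift_cycle[OF DL] by simp
    fix z assume zD: "red (m0 + Suc j) z \<in> D"
    then have zD': "red (Suc (m0 + j)) z \<in> D" by simp
    have zE: "red (m0 + j) z \<in> E" using lift_rep[OF DL zD'] .
    have s4: "acoef f (Suc (m0 + j)) D z = acoef f (m0 + j) E z \<and> 2 * bcoef f (Suc (m0 + j)) D z = bcoef f (m0 + j) E z"
      using split_step(4)[of f "m0 + j" E D z] Ecyc evE DL zD' by blast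
    show "acoef f (m0 + Suc j) D z = acoef f m0 C0 z" using s4 IH zE by simp
    have "2 ^ Suc j * bcoef f (Suc (m0 + j)) D z = 2 ^ j * bcoef f (m0 + j) E z"
      using s4 by (metis mult.assoc mult.commute power_Suc)
    then show "2 ^ Suc j * bcoef f (m0 + Suc j) D z = bcoef f m0 C0 z" using IH zE by simp
  qed
qed

lemma grow_forever:
  assumes C: "is_cycle f m C" and m2: "2 \<le> m" and sg: "strongly_grows f m C"
  shows "above f m C (m + j) D \<Longrightarrow> strongly_grows f (m + j) D \<and> grows f (m + j) D"
proof (induction j arbitrary: D)
  case 0
  then have "D = C" using above_refl_eq[OF C] by simp
  then show ?case using sg grow_step[OF C m2 sg] by simp
next
  case (Suc j)
  define E where "E = (\<lambda>y. y mod 2 ^ (m + j)) ` D"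
  have sp: "above f m C (m + j) E \<and> above f (m + j) E (Suc (m + j)) D"
    using above_split[of f m C "m + Suc j" D "m + j"] Suc.prems unfolding E_def by simp
  have IH: "strongly_grows f (m + j) E" using Suc.IH sp by blast
  have Ec: "is_cycle f (m + j) E" using sp unfolding above_def by simp
  have DL: "D \<in> lifts f (m + j) E" using sp above_lift by blast
  have sD: "strongly_grows f (Suc (m + j)) D" using grow_step(2)[OF Ec _ IH DL] m2 by simp
  have "grows f (Suc (m + j)) D" using grow_step(1)[OF lift_cycle[OF DL] _ sD] m2 by simp
  then show ?case using sD by simp
qed


lemma four_odd: "(4::z2) dvd y - 1 \<Longrightarrow> \<not> 2 dvd y"
proof
  assume a: "(4::z2) dvd y - 1" "2 dvd y"
  have "(2::z2) dvd 4" by (rule dvdI[of _ _ 2]) simp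
  then have "(2::z2) dvd y - 1" using a(1) dvd_trans by blast
  then have "(2::z2) dvd y - (y - 1)" using a(2) dvd_diff by blast
  then have "(2::z2) ^ 1 dvd 1" by simp
  then have "red 1 (1::z2) = 0" by (rule dvd_red_zero)
  then show False by (simp add: red_one)
qed

lemma ss_facts:
  assumes "strongly_splits f n C" "red n z \<in> C"
  shows "(4::z2) dvd acoef f n C z - 1" "2 dvd bcoef f n C z" "\<not> 2 dvd acoef f n C z"
  using assms four_odd unfolding strongly_splits_def by blast+

lemma compat_use:
  assumes "compat f n C x z" "j \<le> n" "(2::z2) ^ j dvd acoef f n C x - 1"
  shows "(2::z2) ^ j dvd bcoef f n C x \<longleftrightarrow> 2 ^ j dvd bcoef f n C z"
  using assms unfolding compat_def by blast

lemma compat_a: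
  assumes "compat f n C x z"
  shows "(2::z2) ^ n dvd acoef f n C x - acoef f n C z"
  using assms unfolding compat_def by blast

lemma dvd_half: "(2::z2) ^ Suc j dvd 2 * y \<longleftrightarrow> 2 ^ j dvd y"
  using pow_dvd_cancel[of j 1 y] by simp

lemma part3:
  assumes n2: "2 \<le> n" and \<sigma>: "is_cycle f n \<sigma>" and ss: "strongly_splits f n \<sigma>" and x: "red n x \<in> \<sigma>"
    and B: "(2::z2) ^ n dvd bcoef f n \<sigma> x" and A: "(2::z2) ^ n dvd acoef f n \<sigma> x - 1"
    and m: "n + 1 \<le> m" "m \<le> 2 * n - 1" and ab: "above f n \<sigma> m D"
  shows "strongly_splits f m D"
proof -
  have ev: "(2::z2) ^ n dvd bcoef f n \<sigma> z" if z: "red n z \<in> \<sigma>" for z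
    using compat_use[OF compat_all[OF \<sigma> ss_facts(3)[OF ss] x z] le_refl A] B by simp
  define j where "j = m - n"
  have mj: "m = n + j" "j \<le> n" "Suc j \<le> n" using m unfolding j_def by auto
  have si: "card D = card \<sigma> \<and> is_cycle f (n + j) D \<and>
     (\<forall>z. red (n + j) z \<in> D \<longrightarrow> acoef f (n + j) D z = acoef f n \<sigma> z \<and>
        2 ^ j * bcoef f (n + j) D z = bcoef f n \<sigma> z)"
    using split_iter[OF \<sigma> ev, of j D] mj ab by simp
  show ?thesis unfolding strongly_splits_def
  proof (intro allI impI conjI)
    fix z assume zD: "red m z \<in> D"
    have z: "red n z \<in> \<sigma>" using above_rep[OF ab zD] .
    have e: "acoef f m D z = acoef f n \<sigma> z" "2 ^ j * bcoef f m D z = bcoef f n \<sigma> z"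
      using si zD mj(1) by auto
    show "(4::z2) dvd acoef f m D z - 1" using e ss_facts(1)[OF ss z] by simp
    have "(2::z2) ^ n dvd 2 ^ j * bcoef f m D z" using e ev[OF z] by simp
    then have "(2::z2) ^ (1 + j) dvd 2 ^ j * bcoef f m D z" using mj(3) pow_dvd_mono[of "1 + j" n] by simp
    then show "2 dvd bcoef f m D z" using pow_dvd_cancel[of 1 j] by simp
  qed
qed

lemma part1:
  assumes n2: "2 \<le> n" and \<sigma>: "is_cycle f n \<sigma>" and ss: "strongly_splits f n \<sigma>" and x: "red n x \<in> \<sigma>"
    and \<beta>n: "\<beta> < n"
    and B1: "(2::z2) ^ \<beta> dvd bcoef f n \<sigma> x" and B2: "\<not> (2::z2) ^ Suc \<beta> dvd bcoef f n \<sigma> x"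
    and A: "(2::z2) ^ Suc \<beta> dvd acoef f n \<sigma> x - 1"
  shows "\<And>m D. n + 1 \<le> m \<Longrightarrow> m \<le> n + \<beta> - 1 \<Longrightarrow> above f n \<sigma> m D \<Longrightarrow> strongly_splits f m D"
    "\<And>D. above f n \<sigma> (n + \<beta>) D \<Longrightarrow> strongly_grows f (n + \<beta>) D"
proof -
  have A': "(2::z2) ^ \<beta> dvd acoef f n \<sigma> x - 1" using A pow_dvd_mono[of \<beta> "Suc \<beta>"] by simp
  have ev: "(2::z2) ^ \<beta> dvd bcoef f n \<sigma> z" if z: "red n z \<in> \<sigma>" for z
    using compat_use[OF compat_all[OF \<sigma> ss_facts(3)[OF ss] x z] _ A'] B1 \<beta>n by simp
  have ev2: "\<not> (2::z2) ^ Suc \<beta> dvd bcoef f n \<sigma> z" if z: "red n z \<in> \<sigma>" for z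
    using compat_use[OF compat_all[OF \<sigma> ss_facts(3)[OF ss] x z] _ A] B2 \<beta>n by simp
  have si: "card D = card \<sigma> \<and> is_cycle f (n + j) D \<and>
     (\<forall>z. red (n + j) z \<in> D \<longrightarrow> acoef f (n + j) D z = acoef f n \<sigma> z \<and>
        2 ^ j * bcoef f (n + j) D z = bcoef f n \<sigma> z)" if "j \<le> \<beta>" "above f n \<sigma> (n + j) D" for j D
    using split_iter[OF \<sigma> ev] that by blast
  show "strongly_splits f m D" if m: "n + 1 \<le> m" "m \<le> n + \<beta> - 1" and ab: "above f n \<sigma> m D" for m D
  proof -
    define j where "j = m - n"
    have mj: "m = n + j" "Suc j \<le> \<beta>" using m unfolding j_def by auto
    note s = si[of j D] 
    show ?thesis unfolding strongly_splits_def
    proof (intro allI impI conjI)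
      fix z assume zD: "red m z \<in> D"
      have z: "red n z \<in> \<sigma>" using above_rep[OF ab zD] .
      have e: "acoef f m D z = acoef f n \<sigma> z" "2 ^ j * bcoef f m D z = bcoef f n \<sigma> z"
        using s mj ab zD by auto
      show "(4::z2) dvd acoef f m D z - 1" using e ss_facts(1)[OF ss z] by simp
      have "(2::z2) ^ \<beta> dvd 2 ^ j * bcoef f m D z" using e ev[OF z] by simp
      then have "(2::z2) ^ (1 + j) dvd 2 ^ j * bcoef f m D z" using mj(2) pow_dvd_mono[of "1 + j" \<beta>] by simp
      then show "2 dvd bcoef f m D z" using pow_dvd_cancel[of 1 j] by simp
    qed
  qed
  show "strongly_grows f (n + \<beta>) D" if ab: "above f n \<sigma> (n + \<beta>) D" for D
    unfolding strongly_grows_def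
  proof (intro allI impI conjI)
    fix z assume zD: "red (n + \<beta>) z \<in> D"
    have z: "red n z \<in> \<sigma>" using above_rep[OF ab zD] .
    have e: "acoef f (n + \<beta>) D z = acoef f n \<sigma> z" "2 ^ \<beta> * bcoef f (n + \<beta>) D z = bcoef f n \<sigma> z"
      using si[of \<beta> D] ab zD by auto
    show "(4::z2) dvd acoef f (n + \<beta>) D z - 1" using e ss_facts(1)[OF ss z] by simp
    show "\<not> 2 dvd bcoef f (n + \<beta>) D z"
    proof
      assume "2 dvd bcoef f (n + \<beta>) D z"
      then have "(2::z2) ^ (1 + \<beta>) dvd 2 ^ \<beta> * bcoef f (n + \<beta>) D z" using pow_dvd_cancel[of 1 \<beta>] by simp
      then show False using ev2[OF z] e by simp
    qed
  qed
qed


lemma part2: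
  assumes n2: "2 \<le> n" and \<sigma>: "is_cycle f n \<sigma>" and ss: "strongly_splits f n \<sigma>" and x: "red n x \<in> \<sigma>"
    and \<alpha>n: "\<alpha> < n"
    and A1: "(2::z2) ^ \<alpha> dvd acoef f n \<sigma> x - 1" and A2: "\<not> (2::z2) ^ Suc \<alpha> dvd acoef f n \<sigma> x - 1"
    and B: "(2::z2) ^ \<alpha> dvd bcoef f n \<sigma> x"
  shows "\<exists>D1 D2. D1 \<noteq> D2 \<and> lifts f n \<sigma> = {D1, D2} \<and> strongly_splits f (Suc n) D1 \<and>
     (\<forall>y. red (Suc n) y \<in> D1 \<longrightarrow> (2::z2) ^ \<alpha> dvd acoef f (Suc n) D1 y - 1 \<and>
          \<not> (2::z2) ^ Suc \<alpha> dvd acoef f (Suc n) D1 y - 1 \<and> (2::z2) ^ \<alpha> dvd bcoef f (Suc n) D1 y) \<and>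
     (\<forall>m D. m \<le> n + \<alpha> - 1 \<longrightarrow> above f (Suc n) D2 m D \<longrightarrow> splits f m D) \<and>
     (\<forall>m D. n + \<alpha> \<le> m \<longrightarrow> above f (Suc n) D2 m D \<longrightarrow> strongly_grows f m D \<and> grows f m D)"
proof -
  note odd\<sigma> = ss_facts(3)[OF ss]
  have \<alpha>2: "2 \<le> \<alpha>"
  proof (rule ccontr)
    assume "\<not> 2 \<le> \<alpha>"
    then have "(2::z2) ^ Suc \<alpha> dvd 2 ^ 2" by (intro le_imp_power_dvd) simp
    moreover have "(4::z2) dvd acoef f n \<sigma> x - 1" using ss_facts(1)[OF ss x] .
    ultimately show False using A2 by (metis dvd_trans power2_eq_square numeral_Bit0 mult_2 numeral_times_numeral one_plus_numeral semiring_norm(2) semiring_norm(6))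
  qed
  have aall: "(2::z2) ^ \<alpha> dvd acoef f n \<sigma> z - 1 \<and> \<not> (2::z2) ^ Suc \<alpha> dvd acoef f n \<sigma> z - 1"
    if z: "red n z \<in> \<sigma>" for z
  proof -
    have d: "(2::z2) ^ n dvd acoef f n \<sigma> x - acoef f n \<sigma> z"
      using compat_a[OF compat_all[OF \<sigma> odd\<sigma> x z]] .
    have d1: "(2::z2) ^ Suc \<alpha> dvd acoef f n \<sigma> x - acoef f n \<sigma> z"
      using d \<alpha>n pow_dvd_mono[of "Suc \<alpha>" n] by simp
    have d2: "(2::z2) ^ \<alpha> dvd acoef f n \<sigma> x - acoef f n \<sigma> z"
      using d \<alpha>n pow_dvd_mono[of \<alpha> n] by simp
    have eq: "acoef f n \<sigma> z - 1 = (acoef f n \<sigma> x - 1) - (acoef f n \<sigma> x - acoef f n \<sigma> z)" by simp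
    show ?thesis
    proof
      show "(2::z2) ^ \<alpha> dvd acoef f n \<sigma> z - 1" unfolding eq using A1 d2 by (rule dvd_diff)
      show "\<not> (2::z2) ^ Suc \<alpha> dvd acoef f n \<sigma> z - 1"
      proof
        assume "(2::z2) ^ Suc \<alpha> dvd acoef f n \<sigma> z - 1"
        then have "(2::z2) ^ Suc \<alpha> dvd (acoef f n \<sigma> z - 1) + (acoef f n \<sigma> x - acoef f n \<sigma> z)"
          using d1 by (rule dvd_add)
        then show False using A2 by simp
      qed
    qed
  qed
  have ball: "(2::z2) ^ \<alpha> dvd bcoef f n \<sigma> z" if z: "red n z \<in> \<sigma>" for z
    using compat_use[OF compat_all[OF \<sigma> odd\<sigma> x z] _ A1] B \<alpha>n by simp
  define x' where "x' = x + 2 ^ n * 1"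
  have x'\<sigma>: "red n x' \<in> \<sigma>" using rep_shift[of n x 1] x unfolding x'_def by simp
  obtain Q where Q: "bcoef f n \<sigma> x' = bcoef f n \<sigma> x + (acoef f n \<sigma> x - 1) + 2 ^ n * Q"
    using b_shift[OF \<sigma> x, of 1] unfolding x'_def by auto
  have nQ: "(2::z2) ^ Suc \<alpha> dvd 2 ^ n * Q" using \<alpha>n
    by (intro dvd_mult2 le_imp_power_dvd) simp
  obtain x1 x2 where x12: "red n x1 \<in> \<sigma>" "red n x2 \<in> \<sigma>"
    "(2::z2) ^ Suc \<alpha> dvd bcoef f n \<sigma> x1" "\<not> (2::z2) ^ Suc \<alpha> dvd bcoef f n \<sigma> x2"
  proof (cases "(2::z2) ^ Suc \<alpha> dvd bcoef f n \<sigma> x")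
    case True
    have "\<not> (2::z2) ^ Suc \<alpha> dvd bcoef f n \<sigma> x'"
    proof
      assume "(2::z2) ^ Suc \<alpha> dvd bcoef f n \<sigma> x'"
      then have "(2::z2) ^ Suc \<alpha> dvd bcoef f n \<sigma> x' - bcoef f n \<sigma> x - 2 ^ n * Q"
        using True nQ by (intro dvd_diff)
      then show False using A2 Q by simp
    qed
    then show ?thesis using that[of x x'] True x x'\<sigma> by blast
  next
    case False
    obtain c where c: "bcoef f n \<sigma> x = 2 ^ \<alpha> * c" using B by blast
    obtain d where d: "acoef f n \<sigma> x - 1 = 2 ^ \<alpha> * d" using A1 by blast
    have co: "\<not> 2 dvd c" using False c pow_dvd_cancel[of 1 \<alpha> c] by auto
    have do: "\<not> 2 dvd d" using A2 d pow_dvd_cancel[of 1 \<alpha> d] by auto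
    have "(2::z2) ^ (1 + \<alpha>) dvd 2 ^ \<alpha> * (c + d)"
      using odd_add_odd[OF co do] pow_dvd_cancel[of 1 \<alpha> "c + d"] by simp
    then have "(2::z2) ^ Suc \<alpha> dvd bcoef f n \<sigma> x + (acoef f n \<sigma> x - 1)"
      using c d by (simp add: algebra_simps)
    then have "(2::z2) ^ Suc \<alpha> dvd bcoef f n \<sigma> x'" using Q nQ by (simp add: dvd_add)
    then show ?thesis using that[of x' x] False x x'\<sigma> by blast
  qed
  have ev\<sigma>: "\<And>z. red n z \<in> \<sigma> \<Longrightarrow> 2 dvd bcoef f n \<sigma> z" using ss_facts(2)[OF ss] .
  obtain D1 where D1: "D1 \<in> lifts f n \<sigma>" "red (Suc n) x1 \<in> D1"
    using split_step(3)[of f n \<sigma> x1] \<sigma> ev\<sigma> x12(1) by blast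
  obtain D2 where D2: "D2 \<in> lifts f n \<sigma>" "red (Suc n) x2 \<in> D2"
    using split_step(3)[of f n \<sigma> x2] \<sigma> ev\<sigma> x12(2) by blast
  have D1c: "is_cycle f (Suc n) D1" and D2c: "is_cycle f (Suc n) D2" using D1 D2 lift_cycle by auto
  have repD: "red n z \<in> \<sigma> \<and> acoef f (Suc n) D z = acoef f n \<sigma> z \<and> 2 * bcoef f (Suc n) D z = bcoef f n \<sigma> z"
    if "D \<in> lifts f n \<sigma>" "red (Suc n) z \<in> D" for D z
    using split_step(4)[of f n \<sigma> D z] \<sigma> ev\<sigma> that lift_rep[OF that] by blast
  have oddD: "\<not> 2 dvd acoef f (Suc n) D z" if "D \<in> lifts f n \<sigma>" "red (Suc n) z \<in> D" for D z
    using repD[OF that] odd\<sigma> by simp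
  have \<alpha>Sn: "\<alpha> \<le> Suc n" using \<alpha>n by simp
  have A1': "(2::z2) ^ \<alpha> dvd acoef f (Suc n) D z - 1" if "D \<in> lifts f n \<sigma>" "red (Suc n) z \<in> D" for D z
    using repD[OF that] aall by simp
  have bD1: "(2::z2) ^ \<alpha> dvd bcoef f (Suc n) D1 z" if z: "red (Suc n) z \<in> D1" for z
  proof -
    have "(2::z2) ^ \<alpha> dvd bcoef f (Suc n) D1 x1"
      using repD[OF D1] x12(3) dvd_half by metis
    then show ?thesis
      using compat_use[OF compat_all[OF D1c oddD[OF D1(1)] D1(2) z] \<alpha>Sn A1'[OF D1]] by simp
  qed
  have bD2: "\<not> (2::z2) ^ \<alpha> dvd bcoef f (Suc n) D2 z" if z: "red (Suc n) z \<in> D2" for z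
  proof -
    have "\<not> (2::z2) ^ \<alpha> dvd bcoef f (Suc n) D2 x2"
      using repD[OF D2] x12(4) dvd_half by metis
    then show ?thesis
      using compat_use[OF compat_all[OF D2c oddD[OF D2(1)] D2(2) z] \<alpha>Sn A1'[OF D2]] by simp
  qed
  obtain \<beta> where \<beta>: "\<alpha> = Suc \<beta>" "1 \<le> \<beta>" using \<alpha>2 by (metis Suc_diff_1 Suc_le_D Suc_le_mono One_nat_def numeral_2_eq_2)
  have bD2': "(2::z2) ^ \<beta> dvd bcoef f (Suc n) D2 z" if z: "red (Suc n) z \<in> D2" for z
    using repD[OF D2(1) z] ball \<beta>(1) dvd_half by metis
  have ne: "D1 \<noteq> D2" using bD1 bD2 D1(2) by blast
  have L: "lifts f n \<sigma> = {D1, D2}"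
  proof -
    have "splits f n \<sigma>" using split_step(1)[of f n \<sigma>] \<sigma> ev\<sigma> by blast
    then have c2: "card (lifts f n \<sigma>) = 2" unfolding splits_def by simp
    then have fin: "finite (lifts f n \<sigma>)" by (metis card.infinite zero_neq_numeral)
    have "{D1, D2} \<subseteq> lifts f n \<sigma>" using D1 D2 by simp
    moreover have "card {D1, D2} = card (lifts f n \<sigma>)" using c2 ne by simp
    ultimately show ?thesis using card_subset_eq[OF fin] by metis
  qed
  have SS1: "strongly_splits f (Suc n) D1" unfolding strongly_splits_def
  proof (intro allI impI conjI)
    fix z assume z: "red (Suc n) z \<in> D1"
    show "(4::z2) dvd acoef f (Suc n) D1 z - 1" using repD[OF D1(1) z] ss_facts(1)[OF ss] by simp
    show "2 dvd bcoef f (Suc n) D1 z" using bD1[OF z] pow_dvd_mono[of 1 \<alpha>] \<alpha>2 by simp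
  qed
  have AB1: "(2::z2) ^ \<alpha> dvd acoef f (Suc n) D1 y - 1 \<and>
          \<not> (2::z2) ^ Suc \<alpha> dvd acoef f (Suc n) D1 y - 1 \<and> (2::z2) ^ \<alpha> dvd bcoef f (Suc n) D1 y"
    if y: "red (Suc n) y \<in> D1" for y
    using repD[OF D1(1) y] aall bD1[OF y] by simp
  have si: "card D = card D2 \<and> is_cycle f (Suc n + j) D \<and>
     (\<forall>z. red (Suc n + j) z \<in> D \<longrightarrow> acoef f (Suc n + j) D z = acoef f (Suc n) D2 z \<and>
        2 ^ j * bcoef f (Suc n + j) D z = bcoef f (Suc n) D2 z)"
    if "j \<le> \<beta>" "above f (Suc n) D2 (Suc n + j) D" for j D
    using split_iter[OF D2c bD2'] that by blast
  have SPL: "splits f m D" if m: "m \<le> n + \<alpha> - 1" and ab: "above f (Suc n) D2 m D" for m D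
  proof -
    have "Suc n \<le> m" using ab unfolding above_def by simp
    then obtain j where mj: "m = Suc n + j" by (metis le_add_diff_inverse)
    have j\<beta>: "Suc j \<le> \<beta>" using m mj \<beta> by simp
    have s: "card D = card D2 \<and> is_cycle f m D \<and>
     (\<forall>z. red m z \<in> D \<longrightarrow> acoef f m D z = acoef f (Suc n) D2 z \<and>
        2 ^ j * bcoef f m D z = bcoef f (Suc n) D2 z)" using si[of j D] j\<beta> ab mj by simp
    have "2 dvd bcoef f m D z" if z: "red m z \<in> D" for z
    proof -
      have "(2::z2) ^ \<beta> dvd 2 ^ j * bcoef f m D z" using s z bD2' above_rep[OF ab z] by metis
      then have "(2::z2) ^ (1 + j) dvd 2 ^ j * bcoef f m D z" using j\<beta> pow_dvd_mono[of "1 + j" \<beta>] by simp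
      then show ?thesis using pow_dvd_cancel[of 1 j] by simp
    qed
    then show ?thesis using split_step(1)[of f m D] s by blast
  qed
  have GRO: "strongly_grows f m D \<and> grows f m D" if m: "n + \<alpha> \<le> m" and ab: "above f (Suc n) D2 m D" for m D
  proof -
    define l where "l = Suc n + \<beta>"
    have l: "l = n + \<alpha>" "Suc n \<le> l" "l \<le> m" "2 \<le> l" using \<beta> m n2 unfolding l_def by auto
    define E where "E = (\<lambda>y. y mod 2 ^ l) ` D"
    have sp2: "above f (Suc n) D2 l E \<and> above f l E m D"
      using above_split[OF ab l(2,3)] unfolding E_def by simp
    have s: "card E = card D2 \<and> is_cycle f l E \<and>
     (\<forall>z. red l z \<in> E \<longrightarrow> acoef f l E z = acoef f (Suc n) D2 z \<and>
        2 ^ \<beta> * bcoef f l E z = bcoef f (Suc n) D2 z)" using si[of \<beta> E] sp2 l_def by simp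
    have sgE: "strongly_grows f l E" unfolding strongly_grows_def
    proof (intro allI impI conjI)
      fix z assume z: "red l z \<in> E"
      have zD2: "red (Suc n) z \<in> D2" using above_rep[OF conjunct1[OF sp2] z] .
      have e: "acoef f l E z = acoef f (Suc n) D2 z" "2 ^ \<beta> * bcoef f l E z = bcoef f (Suc n) D2 z"
        using s z by auto
      show "(4::z2) dvd acoef f l E z - 1" using e repD[OF D2(1) zD2] ss_facts(1)[OF ss] by simp
      show "\<not> 2 dvd bcoef f l E z"
      proof
        assume "2 dvd bcoef f l E z"
        then have "(2::z2) ^ (1 + \<beta>) dvd 2 ^ \<beta> * bcoef f l E z" using pow_dvd_cancel[of 1 \<beta>] by simp
        then show False using bD2[OF zD2] e \<beta>(1) by simp
      qed
    qed
    have lm: "l + (m - l) = m" using l by simp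
    have "above f l E (l + (m - l)) D" using sp2 lm by simp
    then have "strongly_grows f (l + (m - l)) D \<and> grows f (l + (m - l)) D"
      using grow_forever[OF conjunct1[OF conjunct2[OF s]] l(4) sgE] by blast
    then show ?thesis using lm by simp
  qed
  show ?thesis
    apply (rule exI[of _ D1], rule exI[of _ D2])
    using ne L SS1 AB1 SPL GRO by blast
qed


lemma enat_m1: "enat a + enat b - 1 = enat (a + b - 1)"
  by (simp add: one_enat_def)

theorem proposition3p2:
  fixes f :: "z2 poly" and n :: nat and \<sigma> :: "int set" and x :: z2
  assumes "n \<ge> 2"
    and "is_cycle f n \<sigma>"
    and "strongly_splits f n \<sigma>"
    and "red n x \<in> \<sigma>"
  shows
    "(min (Aval f n \<sigma> x) (enat n) > Bval f n \<sigma> x \<longrightarrow>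
       (\<forall>m D. n + 1 \<le> m \<and> enat m \<le> enat n + Bval f n \<sigma> x - 1 \<and> above f n \<sigma> m D
              \<longrightarrow> strongly_splits f m D) \<and>
       (\<forall>m D. enat m = enat n + Bval f n \<sigma> x \<and> above f n \<sigma> m D \<longrightarrow> strongly_grows f m D))
   \<and> (Aval f n \<sigma> x \<le> Bval f n \<sigma> x \<and> Aval f n \<sigma> x < enat n \<longrightarrow>
       (\<exists>D1 D2. D1 \<noteq> D2 \<and> lifts f n \<sigma> = {D1, D2} \<and>
          strongly_splits f (n + 1) D1 \<and>
          (\<forall>y. red (n + 1) y \<in> D1 \<longrightarrow>
              Aval f (n + 1) D1 y \<le> Bval f (n + 1) D1 y \<and> Aval f (n + 1) D1 y < enat (n + 1)) \<and>
          (\<forall>m D. enat m \<le> enat n + Aval f n \<sigma> x - 1 \<and> above f (n + 1) D2 m D \<longrightarrow> splits f m D) \<and>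
          (\<forall>m D. enat m \<ge> enat n + Aval f n \<sigma> x \<and> above f (n + 1) D2 m D \<longrightarrow>
              strongly_grows f m D \<and> grows f m D)))
   \<and> (Bval f n \<sigma> x \<ge> enat n \<and> Aval f n \<sigma> x \<ge> enat n \<longrightarrow>
       (\<forall>m D. n + 1 \<le> m \<and> m \<le> 2 * n - 1 \<and> above f n \<sigma> m D \<longrightarrow> strongly_splits f m D))"
proof (intro conjI impI)
  note n2 = assms(1) and \<sigma> = assms(2) and ss = assms(3) and x = assms(4)
  let ?a = "acoef f n \<sigma> x" and ?b = "bcoef f n \<sigma> x"
  have Adef: "Aval f n \<sigma> x = v2 (?a - 1)" and Bdef: "Bval f n \<sigma> x = v2 ?b"
    unfolding Aval_def Bval_def by simp_all
  {
    assume h: "min (Aval f n \<sigma> x) (enat n) > Bval f n \<sigma> x"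
    then have hB: "Bval f n \<sigma> x < enat n" and hA: "Bval f n \<sigma> x < Aval f n \<sigma> x" by auto
    obtain \<beta> where \<beta>: "Bval f n \<sigma> x = enat \<beta>" using hB by (cases "Bval f n \<sigma> x") auto
    have \<beta>n: "\<beta> < n" using hB \<beta> by simp
    have B12: "(2::z2) ^ \<beta> dvd ?b" "\<not> (2::z2) ^ Suc \<beta> dvd ?b"
      using \<beta> Bdef v2_eq_iff by auto
    have "enat (Suc \<beta>) \<le> Aval f n \<sigma> x" using hA \<beta> by (simp add: Suc_ile_eq)
    then have A: "(2::z2) ^ Suc \<beta> dvd ?a - 1" using Adef v2_ge_iff by simp
    note p1 = part1[OF n2 \<sigma> ss x \<beta>n B12 A]
    show "\<forall>m D. n + 1 \<le> m \<and> enat m \<le> enat n + Bval f n \<sigma> x - 1 \<and> above f n \<sigma> m D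
              \<longrightarrow> strongly_splits f m D"
    proof (intro allI impI)
      fix m D assume h1: "n + 1 \<le> m \<and> enat m \<le> enat n + Bval f n \<sigma> x - 1 \<and> above f n \<sigma> m D"
      then have "m \<le> n + \<beta> - 1" using \<beta> enat_m1 by simp
      then show "strongly_splits f m D" using p1(1) h1 by blast
    qed
    show "\<forall>m D. enat m = enat n + Bval f n \<sigma> x \<and> above f n \<sigma> m D \<longrightarrow> strongly_grows f m D"
    proof (intro allI impI)
      fix m D assume h1: "enat m = enat n + Bval f n \<sigma> x \<and> above f n \<sigma> m D"
      then have "m = n + \<beta>" using \<beta> by simp
      then show "strongly_grows f m D" using p1(2) h1 by blast
    qed
  }
  {
    assume h: "Aval f n \<sigma> x \<le> Bval f n \<sigma> x \<and> Aval f n \<sigma> x < enat n"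
    obtain \<alpha> where \<alpha>: "Aval f n \<sigma> x = enat \<alpha>" using h by (cases "Aval f n \<sigma> x") auto
    have \<alpha>n: "\<alpha> < n" using h \<alpha> by simp
    have A12: "(2::z2) ^ \<alpha> dvd ?a - 1" "\<not> (2::z2) ^ Suc \<alpha> dvd ?a - 1"
      using \<alpha> Adef v2_eq_iff by auto
    have B: "(2::z2) ^ \<alpha> dvd ?b" using h \<alpha> Bdef v2_ge_iff by metis
    obtain D1 D2 where D: "D1 \<noteq> D2" "lifts f n \<sigma> = {D1, D2}" "strongly_splits f (Suc n) D1"
     "\<forall>y. red (Suc n) y \<in> D1 \<longrightarrow> (2::z2) ^ \<alpha> dvd acoef f (Suc n) D1 y - 1 \<and>
          \<not> (2::z2) ^ Suc \<alpha> dvd acoef f (Suc n) D1 y - 1 \<and> (2::z2) ^ \<alpha> dvd bcoef f (Suc n) D1 y"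
     "\<forall>m D. m \<le> n + \<alpha> - 1 \<longrightarrow> above f (Suc n) D2 m D \<longrightarrow> splits f m D"
     "\<forall>m D. n + \<alpha> \<le> m \<longrightarrow> above f (Suc n) D2 m D \<longrightarrow> strongly_grows f m D \<and> grows f m D"
      using part2[OF n2 \<sigma> ss x \<alpha>n A12 B] by blast
    show "\<exists>D1 D2. D1 \<noteq> D2 \<and> lifts f n \<sigma> = {D1, D2} \<and>
          strongly_splits f (n + 1) D1 \<and>
          (\<forall>y. red (n + 1) y \<in> D1 \<longrightarrow>
              Aval f (n + 1) D1 y \<le> Bval f (n + 1) D1 y \<and> Aval f (n + 1) D1 y < enat (n + 1)) \<and>
          (\<forall>m D. enat m \<le> enat n + Aval f n \<sigma> x - 1 \<and> above f (n + 1) D2 m D \<longrightarrow> splits f m D) \<and>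
          (\<forall>m D. enat m \<ge> enat n + Aval f n \<sigma> x \<and> above f (n + 1) D2 m D \<longrightarrow>
              strongly_grows f m D \<and> grows f m D)"
    proof (rule exI[of _ D1], rule exI[of _ D2], intro conjI allI impI)
      show "D1 \<noteq> D2" "lifts f n \<sigma> = {D1, D2}" using D by auto
      show "strongly_splits f (n + 1) D1" using D by simp
      fix y assume y: "red (n + 1) y \<in> D1"
      then have yy: "(2::z2) ^ \<alpha> dvd acoef f (Suc n) D1 y - 1 \<and>
          \<not> (2::z2) ^ Suc \<alpha> dvd acoef f (Suc n) D1 y - 1 \<and> (2::z2) ^ \<alpha> dvd bcoef f (Suc n) D1 y"
        using D(4) by simp
      have AA: "Aval f (n + 1) D1 y = enat \<alpha>" unfolding Aval_def using yy v2_eq_iff by simp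
      have BB: "enat \<alpha> \<le> Bval f (n + 1) D1 y" unfolding Bval_def using yy v2_ge_iff by simp
      show "Aval f (n + 1) D1 y \<le> Bval f (n + 1) D1 y" using AA BB by simp
      show "Aval f (n + 1) D1 y < enat (n + 1)" using AA \<alpha>n by simp
    next
      fix m D assume h1: "enat m \<le> enat n + Aval f n \<sigma> x - 1 \<and> above f (n + 1) D2 m D"
      then have "m \<le> n + \<alpha> - 1" using \<alpha> enat_m1 by simp
      then show "splits f m D" using D(5) h1 by simp
    next
      fix m D assume h1: "enat m \<ge> enat n + Aval f n \<sigma> x \<and> above f (n + 1) D2 m D"
      then have "n + \<alpha> \<le> m" using \<alpha> by simp
      then show "strongly_grows f m D" "grows f m D" using D(6) h1 by simp_all
    qed
  }
  {
    assume h: "Bval f n \<sigma> x \<ge> enat n \<and> Aval f n \<sigma> x \<ge> enat n"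
    have B: "(2::z2) ^ n dvd ?b" using h Bdef v2_ge_iff by metis
    have A: "(2::z2) ^ n dvd ?a - 1" using h Adef v2_ge_iff by metis
    show "\<forall>m D. n + 1 \<le> m \<and> m \<le> 2 * n - 1 \<and> above f n \<sigma> m D \<longrightarrow> strongly_splits f m D"
      using part3[OF n2 \<sigma> ss x B A] by blast
  }
qed


end
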